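(* Let $N\ge1$. The group $\Phi_N$ is generated by $U=\{A^N,B^N\}\cup\{A^iB^jCB^{-j}A^{-i}:0\le i,j\le N-1\}$. Moreover, $\Phi_N$ has the presentation with generators $a,b,T_{i,j}$ ($0\le i,j\le N-1$), corresponding to $A^N$, $B^N$ and $A^iB^jCB^{-j}A^{-i}$ respectively, and the single relation $$aba^{-1}b^{-1}=\prod_{i=0}^{N-1}\prod_{j=0}^{N-1}T_{N-1-i,j},$$ the product being ordered with $i$ increasing in the outer product and $j$ increasing in the inner product.
   Context: Let $\bar\Gamma(2)=\Gamma(2)/\{\pm1\}\subset\mathrm{PSL}_2(\mathbb{Z})$, freely generated by the classes $A$ of $\begin{pmatrix}1&2\\0&1\end{pmatrix}$ and $B$ of $\begin{pmatrix}1&0\\2&1\end{pmatrix}$; $C=ABA^{-1}B^{-1}$. $\Phi_N$ is the kernel of the homomorphism $\bar\Gamma(2)\to(\mathbb{Z}/N\mathbb{Z})^2$ sending $A\mapsto(1,0)$ and $B\mapsto(0,1)$. *)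

theory Defs
  imports "HOL-Algebra.Algebra"
begin

text \<open>A word is a list of letters (g, e); e = False means g, e = True means g inverse.\<close>

fun red :: "('g \<times> bool) list \<Rightarrow> ('g \<times> bool) list" where
  "red [] = []"
| "red (x # xs) =
     (case red xs of
        [] \<Rightarrow> [x]
      | y # ys \<Rightarrow> (if fst y = fst x \<and> snd y \<noteq> snd x then ys else x # y # ys))"

definition free_group_on :: "'g set \<Rightarrow> ('g \<times> bool) list monoid" where
  "free_group_on S =
     \<lparr> carrier = {w. red w = w \<and> fst ` set w \<subseteq> S},
       monoid.mult = (\<lambda>x y. red (x @ y)),
       one = [] \<rparr>"

definition gen_word :: "'g \<Rightarrow> ('g \<times> bool) list" where
  "gen_word g = [(g, False)]"

definition lprod :: "('a, 'b) monoid_scheme \<Rightarrow> 'a list \<Rightarrow> 'a" where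
  "lprod G xs = foldr (\<lambda>x acc. x \<otimes>\<^bsub>G\<^esub> acc) xs \<one>\<^bsub>G\<^esub>"

definition free_ext :: "('a, 'b) monoid_scheme \<Rightarrow> ('g \<Rightarrow> 'a) \<Rightarrow> ('g \<times> bool) list \<Rightarrow> 'a" where
  "free_ext G f w = lprod G (map (\<lambda>(g, e). if e then inv\<^bsub>G\<^esub> (f g) else f g) w)"

definition normal_closure :: "('a, 'b) monoid_scheme \<Rightarrow> 'a set \<Rightarrow> 'a set" where
  "normal_closure G S =
     generate G {g \<otimes>\<^bsub>G\<^esub> s \<otimes>\<^bsub>G\<^esub> inv\<^bsub>G\<^esub> g | g s. g \<in> carrier G \<and> s \<in> S}"

section \<open>\<Gamma>(2) bar, realised as the free group on A, B\<close>

datatype ab = GA | GB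

definition Gamma2 :: "(ab \<times> bool) list monoid" where
  "Gamma2 = free_group_on UNIV"

abbreviation Amat :: "(ab \<times> bool) list" where "Amat \<equiv> gen_word GA"
abbreviation Bmat :: "(ab \<times> bool) list" where "Bmat \<equiv> gen_word GB"

definition Cmat :: "(ab \<times> bool) list" where
  "Cmat = Amat \<otimes>\<^bsub>Gamma2\<^esub> Bmat \<otimes>\<^bsub>Gamma2\<^esub> inv\<^bsub>Gamma2\<^esub> Amat \<otimes>\<^bsub>Gamma2\<^esub> inv\<^bsub>Gamma2\<^esub> Bmat"

definition expsum :: "'g \<Rightarrow> ('g \<times> bool) list \<Rightarrow> int" where
  "expsum g w = (\<Sum>x\<leftarrow>w. if fst x = g then (if snd x then -1 else 1) else 0)"

text \<open>The homomorphism \<Gamma>(2) bar \<rightarrow> (Z/NZ)^2, A \<mapsto> (1,0), B \<mapsto> (0,1), written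
  explicitly (residues represented in {0..N-1}); Phi N is its kernel.\<close>
definition to_ZN2 :: "nat \<Rightarrow> (ab \<times> bool) list \<Rightarrow> int \<times> int" where
  "to_ZN2 N w = (expsum GA w mod int N, expsum GB w mod int N)"

definition Phi :: "nat \<Rightarrow> (ab \<times> bool) list set" where
  "Phi N = {w \<in> carrier Gamma2. to_ZN2 N w = (0, 0)}"

definition Tconj :: "nat \<Rightarrow> nat \<Rightarrow> (ab \<times> bool) list" where
  "Tconj i j = Amat [^]\<^bsub>Gamma2\<^esub> i \<otimes>\<^bsub>Gamma2\<^esub> Bmat [^]\<^bsub>Gamma2\<^esub> j \<otimes>\<^bsub>Gamma2\<^esub> Cmat
     \<otimes>\<^bsub>Gamma2\<^esub> inv\<^bsub>Gamma2\<^esub> (Bmat [^]\<^bsub>Gamma2\<^esub> j) \<otimes>\<^bsub>Gamma2\<^esub> inv\<^bsub>Gamma2\<^esub> (Amat [^]\<^bsub>Gamma2\<^esub> i)"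

definition genU :: "nat \<Rightarrow> (ab \<times> bool) list set" where
  "genU N = {Amat [^]\<^bsub>Gamma2\<^esub> N, Bmat [^]\<^bsub>Gamma2\<^esub> N}
            \<union> {Tconj i j | i j. i < N \<and> j < N}"

datatype pgen = Pa | Pb | PT nat nat

definition pgens :: "nat \<Rightarrow> pgen set" where
  "pgens N = {Pa, Pb} \<union> {PT i j | i j. i < N \<and> j < N}"

definition PF :: "nat \<Rightarrow> (pgen \<times> bool) list monoid" where
  "PF N = free_group_on (pgens N)"

definition pgen_img :: "nat \<Rightarrow> pgen \<Rightarrow> (ab \<times> bool) list" where
  "pgen_img N g = (case g of Pa \<Rightarrow> Amat [^]\<^bsub>Gamma2\<^esub> N | Pb \<Rightarrow> Bmat [^]\<^bsub>Gamma2\<^esub> N | PT i j \<Rightarrow> Tconj i j)"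

definition pres_map :: "nat \<Rightarrow> (pgen \<times> bool) list \<Rightarrow> (ab \<times> bool) list" where
  "pres_map N = free_ext Gamma2 (pgen_img N)"

definition relator :: "nat \<Rightarrow> (pgen \<times> bool) list" where
  "relator N =
    (let F = PF N; a = gen_word Pa; b = gen_word Pb;
         P = lprod F (concat (map (\<lambda>i. map (\<lambda>j. gen_word (PT (N - 1 - i) j)) [0..<N]) [0..<N]))
     in a \<otimes>\<^bsub>F\<^esub> b \<otimes>\<^bsub>F\<^esub> inv\<^bsub>F\<^esub> a \<otimes>\<^bsub>F\<^esub> inv\<^bsub>F\<^esub> b \<otimes>\<^bsub>F\<^esub> inv\<^bsub>F\<^esub> P)"

end

theory Submission
  imports Defs
begin

section \<open>Free reduction\<close>

definition cons_red :: "('g \<times> bool) \<Rightarrow> ('g \<times> bool) list \<Rightarrow> ('g \<times> bool) list" where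
  "cons_red x r = (case r of [] \<Rightarrow> [x]
      | y # ys \<Rightarrow> (if fst y = fst x \<and> snd y \<noteq> snd x then ys else x # y # ys))"

lemma red_Cons: "red (x # xs) = cons_red x (red xs)"
  by (simp add: cons_red_def)

declare red.simps(2)[simp del]

fun isred :: "('g \<times> bool) list \<Rightarrow> bool" where
  "isred [] = True"
| "isred [x] = True"
| "isred (x # y # ys) = (\<not> (fst y = fst x \<and> snd y \<noteq> snd x) \<and> isred (y # ys))"

lemma isred_tl: "isred (x # xs) \<Longrightarrow> isred xs"
  by (cases xs) auto

lemma isred_cons_red: "isred r \<Longrightarrow> isred (cons_red x r)"
  by (cases r) (auto simp: cons_red_def dest: isred_tl)

lemma isred_red: "isred (red w)"
  by (induct w) (auto simp: red_Cons isred_cons_red)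

lemma red_isred: "isred w \<Longrightarrow> red w = w"
  by (induct w rule: isred.induct) (auto simp: red_Cons cons_red_def)

lemma red_red[simp]: "red (red w) = red w"
  using isred_red red_isred by blast

lemma cons_red_cancel:
  assumes "isred s" "fst y = fst x" "snd y \<noteq> snd x"
  shows "cons_red x (cons_red y s) = s"
proof (cases s)
  case Nil then show ?thesis using assms by (simp add: cons_red_def)
next
  case (Cons z zs)
  show ?thesis
  proof (cases "fst z = fst y \<and> snd z \<noteq> snd y")
    case True
    then have zx: "z = x" using assms by (cases z; cases x) auto
    show ?thesis
    proof (cases zs)
      case Nil then show ?thesis using Cons True zx by (simp add: cons_red_def)
    next
      case (Cons w ws)
      then show ?thesis using \<open>s = z # zs\<close> True zx assms(1) by (auto simp: cons_red_def)
    qed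
  next
    case False
    then show ?thesis using Cons assms by (auto simp: cons_red_def)
  qed
qed

lemma red_append_right: "red (u @ red v) = red (u @ v)"
  by (induct u) (auto simp: red_Cons)

lemma red_cons_red_append:
  assumes "isred r"
  shows "red (cons_red x r @ v) = cons_red x (red (r @ v))"
proof (cases r)
  case Nil then show ?thesis by (simp add: cons_red_def red_Cons)
next
  case (Cons y ys)
  show ?thesis
  proof (cases "fst y = fst x \<and> snd y \<noteq> snd x")
    case True
    then have "cons_red x (red (r @ v)) = cons_red x (cons_red y (red (ys @ v)))"
      using Cons by (simp add: red_Cons)
    also have "\<dots> = red (ys @ v)" using True cons_red_cancel isred_red by metis
    finally show ?thesis using Cons True by (simp add: cons_red_def)
  next
    case False
    then have "cons_red x r = x # r" using Cons by (simp add: cons_red_def)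
    then show ?thesis using Cons by (simp add: red_Cons)
  qed
qed

lemma red_append_left: "red (red u @ v) = red (u @ v)"
proof (induct u)
  case Nil then show ?case by simp
next
  case (Cons x u)
  have "red (red (x # u) @ v) = red (cons_red x (red u) @ v)" by (simp add: red_Cons)
  also have "\<dots> = cons_red x (red (red u @ v))" by (rule red_cons_red_append[OF isred_red])
  also have "\<dots> = red ((x # u) @ v)" using Cons by (simp add: red_Cons)
  finally show ?case .
qed

definition flipl :: "('g \<times> bool) \<Rightarrow> ('g \<times> bool)" where
  "flipl x = (fst x, \<not> snd x)"

definition winv :: "('g \<times> bool) list \<Rightarrow> ('g \<times> bool) list" where
  "winv w = rev (map flipl w)"

lemma red_cancel_mid: "red (u @ flipl x # x # v) = red (u @ v)"
proof -
  have "red (flipl x # x # v) = red v"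
    by (simp add: red_Cons cons_red_cancel isred_red flipl_def)
  then show ?thesis by (metis red_append_right)
qed

lemma red_winv: "red (winv w @ w) = []"
proof (induct w)
  case Nil then show ?case by (simp add: winv_def)
next
  case (Cons x w)
  have "winv (x # w) @ x # w = winv w @ flipl x # x # w" by (simp add: winv_def)
  then show ?case using Cons red_cancel_mid by metis
qed

lemma set_red: "set (red w) \<subseteq> set w"
proof (induct w)
  case Nil then show ?case by simp
next
  case (Cons x w)
  then show ?case by (auto simp: red_Cons cons_red_def split: list.splits if_splits)
qed

lemma fst_set_winv: "fst ` set (winv w) = fst ` set w"
  by (force simp: winv_def flipl_def image_iff)

lemma FG_carrier: "w \<in> carrier (free_group_on S) \<longleftrightarrow> red w = w \<and> fst ` set w \<subseteq> S"
  by (simp add: free_group_on_def)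

lemma FG_mult: "x \<otimes>\<^bsub>free_group_on S\<^esub> y = red (x @ y)"
  by (simp add: free_group_on_def)

lemma FG_one: "\<one>\<^bsub>free_group_on S\<^esub> = []"
  by (simp add: free_group_on_def)

lemma red_in_FG: "fst ` set w \<subseteq> S \<Longrightarrow> red w \<in> carrier (free_group_on S)"
  using set_red[of w] by (auto simp: FG_carrier)

lemma FG_red_mult: "red u \<otimes>\<^bsub>free_group_on S\<^esub> red v = red (u @ v)"
  by (simp add: FG_mult red_append_left red_append_right)

lemma group_FG: "group (free_group_on S)"
proof (rule groupI)
  fix x y assume "x \<in> carrier (free_group_on S)" "y \<in> carrier (free_group_on S)"
  then show "x \<otimes>\<^bsub>free_group_on S\<^esub> y \<in> carrier (free_group_on S)"
    using red_in_FG[of "x @ y" S] by (auto simp: FG_mult FG_carrier)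
next
  show "\<one>\<^bsub>free_group_on S\<^esub> \<in> carrier (free_group_on S)" by (simp add: FG_one FG_carrier)
next
  fix x y z assume "x \<in> carrier (free_group_on S)" "y \<in> carrier (free_group_on S)"
    "z \<in> carrier (free_group_on S)"
  then show "x \<otimes>\<^bsub>free_group_on S\<^esub> y \<otimes>\<^bsub>free_group_on S\<^esub> z =
     x \<otimes>\<^bsub>free_group_on S\<^esub> (y \<otimes>\<^bsub>free_group_on S\<^esub> z)"
    by (simp add: FG_mult red_append_left red_append_right)
next
  fix x assume "x \<in> carrier (free_group_on S)"
  then show "\<one>\<^bsub>free_group_on S\<^esub> \<otimes>\<^bsub>free_group_on S\<^esub> x = x"
    by (simp add: FG_mult FG_one FG_carrier)
next
  fix x assume x: "x \<in> carrier (free_group_on S)"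
  have "red (winv x) \<in> carrier (free_group_on S)"
    using x by (intro red_in_FG) (simp add: fst_set_winv FG_carrier)
  moreover have "red (winv x) \<otimes>\<^bsub>free_group_on S\<^esub> x = \<one>\<^bsub>free_group_on S\<^esub>"
    using x by (simp add: FG_mult FG_one red_append_left red_winv)
  ultimately show "\<exists>y\<in>carrier (free_group_on S). y \<otimes>\<^bsub>free_group_on S\<^esub> x = \<one>\<^bsub>free_group_on S\<^esub>"
    by blast
qed

lemma FG_inv_red:
  assumes "fst ` set w \<subseteq> S"
  shows "inv\<^bsub>free_group_on S\<^esub> (red w) = red (winv w)"
proof (rule group.inv_equality[OF group_FG])
  show "red (winv w) \<otimes>\<^bsub>free_group_on S\<^esub> red w = \<one>\<^bsub>free_group_on S\<^esub>"
    by (simp add: FG_red_mult red_winv FG_one)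
  show "red w \<in> carrier (free_group_on S)" using assms by (rule red_in_FG)
  show "red (winv w) \<in> carrier (free_group_on S)" using assms by (intro red_in_FG) (simp add: fst_set_winv)
qed


lemma lprod_Nil[simp]: "lprod G [] = \<one>\<^bsub>G\<^esub>"
  by (simp add: lprod_def)

lemma lprod_Cons[simp]: "lprod G (x # xs) = x \<otimes>\<^bsub>G\<^esub> lprod G xs"
  by (simp add: lprod_def)

context group
begin

lemma inv_cancel_left[simp]: "x \<in> carrier G \<Longrightarrow> y \<in> carrier G \<Longrightarrow> inv x \<otimes> (x \<otimes> y) = y"
  by (simp add: m_assoc[symmetric])

lemma inv_cancel_left2[simp]: "x \<in> carrier G \<Longrightarrow> y \<in> carrier G \<Longrightarrow> x \<otimes> (inv x \<otimes> y) = y"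
  by (simp add: m_assoc[symmetric])

lemma lprod_closed[intro, simp]: "set xs \<subseteq> carrier G \<Longrightarrow> lprod G xs \<in> carrier G"
  by (induct xs) auto

lemma lprod_append: "set xs \<subseteq> carrier G \<Longrightarrow> set ys \<subseteq> carrier G \<Longrightarrow>
    lprod G (xs @ ys) = lprod G xs \<otimes> lprod G ys"
  by (induct xs) (auto simp: m_assoc)

lemma lprod_conj: "x \<in> carrier G \<Longrightarrow> set xs \<subseteq> carrier G \<Longrightarrow>
    x \<otimes> lprod G xs \<otimes> inv x = lprod G (map (\<lambda>y. x \<otimes> y \<otimes> inv x) xs)"
proof (induct xs)
  case Nil then show ?case by simp
next
  case (Cons y xs)
  have "x \<otimes> lprod G (y # xs) \<otimes> inv x = (x \<otimes> y \<otimes> inv x) \<otimes> (x \<otimes> lprod G xs \<otimes> inv x)"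
    using Cons(2,3) by (simp add: m_assoc)
  also have "\<dots> = (x \<otimes> y \<otimes> inv x) \<otimes> lprod G (map (\<lambda>y. x \<otimes> y \<otimes> inv x) xs)"
    using Cons(1)[OF Cons(2)] Cons(3) by simp
  finally show ?case by simp
qed

lemma lprod_subgroup: "subgroup H G \<Longrightarrow> set xs \<subseteq> H \<Longrightarrow> lprod G xs \<in> H"
  by (induct xs) (auto intro: subgroup.one_closed subgroup.m_closed)

end

lemma lprod_hom:
  assumes "group G" "group H" "h \<in> hom G H" "set xs \<subseteq> carrier G"
  shows "h (lprod G xs) = lprod H (map h xs)"
proof -
  interpret group_hom G H h using assms by (simp add: group_hom_def group_hom_axioms_def)
  show ?thesis using assms(4) by (induct xs) auto
qed

definition limg :: "('a, 'b) monoid_scheme \<Rightarrow> ('g \<Rightarrow> 'a) \<Rightarrow> ('g \<times> bool) \<Rightarrow> 'a" where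
  "limg G f x = (if snd x then inv\<^bsub>G\<^esub> (f (fst x)) else f (fst x))"

lemma free_ext_Nil[simp]: "free_ext G f [] = \<one>\<^bsub>G\<^esub>"
  by (simp add: free_ext_def)

lemma free_ext_Cons[simp]: "free_ext G f (x # w) = limg G f x \<otimes>\<^bsub>G\<^esub> free_ext G f w"
  by (cases x) (simp add: free_ext_def limg_def)

context group
begin

lemma limg_closed[simp]: "f (fst x) \<in> carrier G \<Longrightarrow> limg G f x \<in> carrier G"
  by (simp add: limg_def)

lemma free_ext_closed[simp]: "f ` fst ` set w \<subseteq> carrier G \<Longrightarrow> free_ext G f w \<in> carrier G"
  by (induct w) auto

lemma free_ext_append: "f ` fst ` set u \<subseteq> carrier G \<Longrightarrow> f ` fst ` set v \<subseteq> carrier G \<Longrightarrow>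
   free_ext G f (u @ v) = free_ext G f u \<otimes> free_ext G f v"
  by (induct u) (auto simp: m_assoc)

lemma free_ext_cons_red:
  assumes "f (fst x) \<in> carrier G" "f ` fst ` set r \<subseteq> carrier G"
  shows "free_ext G f (cons_red x r) = free_ext G f (x # r)"
proof (cases r)
  case Nil then show ?thesis by (simp add: cons_red_def)
next
  case (Cons y ys)
  show ?thesis
  proof (cases "fst y = fst x \<and> snd y \<noteq> snd x")
    case True
    have c: "f (fst x) \<in> carrier G" "free_ext G f ys \<in> carrier G" using assms Cons by auto
    have "limg G f x \<otimes> limg G f y = \<one>" using True c(1) by (cases "snd x") (auto simp: limg_def)
    then have "limg G f x \<otimes> (limg G f y \<otimes> free_ext G f ys) = free_ext G f ys"
      using c by (metis l_one limg_closed m_assoc \<open>fst y = fst x \<and> _\<close>)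
    moreover have "cons_red x r = ys" using True Cons by (simp add: cons_red_def)
    ultimately show ?thesis using Cons by simp
  next
    case False
    then have "cons_red x r = x # r" using Cons by (simp add: cons_red_def)
    then show ?thesis by simp
  qed
qed

lemma free_ext_red: "f ` fst ` set w \<subseteq> carrier G \<Longrightarrow> free_ext G f (red w) = free_ext G f w"
proof (induct w)
  case Nil then show ?case by simp
next
  case (Cons x w)
  have "f ` fst ` set (red w) \<subseteq> carrier G" using Cons(2) set_red[of w] by auto
  then have "free_ext G f (red (x # w)) = free_ext G f (x # red w)"
    using Cons(2) by (simp add: red_Cons free_ext_cons_red)
  then show ?case using Cons by simp
qed

lemma free_ext_hom:
  assumes "f ` S \<subseteq> carrier G"
  shows "free_ext G f \<in> hom (free_group_on S) G"
proof (rule homI)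
  fix x assume "x \<in> carrier (free_group_on S)"
  then have "f ` fst ` set x \<subseteq> carrier G" using assms by (auto simp: FG_carrier)
  then show "free_ext G f x \<in> carrier G" by simp
next
  fix x y assume xy: "x \<in> carrier (free_group_on S)" "y \<in> carrier (free_group_on S)"
  then have s: "f ` fst ` set x \<subseteq> carrier G" "f ` fst ` set y \<subseteq> carrier G"
    using assms unfolding FG_carrier by blast+
  then show "free_ext G f (x \<otimes>\<^bsub>free_group_on S\<^esub> y) = free_ext G f x \<otimes> free_ext G f y"
    by (simp add: FG_mult free_ext_red free_ext_append image_Un)
qed

lemma free_ext_image:
  assumes "f ` S \<subseteq> carrier G"
  shows "free_ext G f ` carrier (free_group_on S) = generate G (f ` S)"
proof
  show "free_ext G f ` carrier (free_group_on S) \<subseteq> generate G (f ` S)"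
  proof
    fix y assume "y \<in> free_ext G f ` carrier (free_group_on S)"
    then obtain w where w: "fst ` set w \<subseteq> S" "y = free_ext G f w" by (auto simp: FG_carrier)
    have "fst ` set w \<subseteq> S \<Longrightarrow> free_ext G f w \<in> generate G (f ` S)"
    proof (induct w)
      case Nil then show ?case by (simp add: generate.one)
    next
      case (Cons x w)
      have "limg G f x \<in> generate G (f ` S)"
        using Cons(2) by (auto simp: limg_def intro: generate.incl generate.inv)
      then show ?case using Cons by (auto intro: generate.eng)
    qed
    then show "y \<in> generate G (f ` S)" using w by simp
  qed
next
  show "generate G (f ` S) \<subseteq> free_ext G f ` carrier (free_group_on S)"
  proof
    fix y assume "y \<in> generate G (f ` S)"
    then show "y \<in> free_ext G f ` carrier (free_group_on S)"
    proof induct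
      case one
      have "[] \<in> carrier (free_group_on S)" by (simp add: FG_carrier)
      then show ?case by (metis free_ext_Nil image_eqI)
    next
      case (incl h)
      then obtain g where g: "g \<in> S" "h = f g" by auto
      have "[(g, False)] \<in> carrier (free_group_on S)" using g by (simp add: FG_carrier red_Cons cons_red_def)
      moreover have "free_ext G f [(g, False)] = h" using g assms by (auto simp: limg_def)
      ultimately show ?case by (metis image_eqI)
    next
      case (inv h)
      then obtain g where g: "g \<in> S" "h = f g" by auto
      have "[(g, True)] \<in> carrier (free_group_on S)" using g by (simp add: FG_carrier red_Cons cons_red_def)
      moreover have "free_ext G f [(g, True)] = inv h" using g assms by (auto simp: limg_def)
      ultimately show ?case by (metis image_eqI)
    next
      case (eng h1 h2)
      then obtain w1 w2 where w: "w1 \<in> carrier (free_group_on S)" "w2 \<in> carrier (free_group_on S)"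
        "h1 = free_ext G f w1" "h2 = free_ext G f w2" by auto
      have "w1 \<otimes>\<^bsub>free_group_on S\<^esub> w2 \<in> carrier (free_group_on S)"
        using w monoid.m_closed[OF group.is_monoid[OF group_FG]] by blast
      moreover have "free_ext G f (w1 \<otimes>\<^bsub>free_group_on S\<^esub> w2) = h1 \<otimes> h2"
        using w free_ext_hom[OF assms] by (simp add: hom_mult)
      ultimately show ?case by (metis image_eqI)
    qed
  qed
qed

end

lemma expsum_Nil[simp]: "expsum g [] = 0"
  by (simp add: expsum_def)

lemma expsum_Cons[simp]: "expsum g (x # w) = (if fst x = g then (if snd x then -1 else 1) else 0) + expsum g w"
  by (simp add: expsum_def)

lemma expsum_append[simp]: "expsum g (u @ v) = expsum g u + expsum g v"
  by (induct u) auto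

lemma expsum_cons_red: "expsum g (cons_red x r) = expsum g (x # r)"
  by (cases r) (auto simp: cons_red_def)

lemma expsum_red[simp]: "expsum g (red w) = expsum g w"
  by (induct w) (auto simp: red_Cons expsum_cons_red)

lemma expsum_winv[simp]: "expsum g (winv w) = - expsum g w"
  by (induct w) (auto simp: winv_def flipl_def)

lemma expsum_replicate[simp]: "expsum g (replicate n x) = int n * (if fst x = g then (if snd x then -1 else 1) else 0)"
  by (induct n) (auto simp: algebra_simps)


section \<open>Commutator identities in an arbitrary group\<close>

context group
begin

lemma comm_pow_identity:
  assumes a: "a \<in> carrier G" and b: "b \<in> carrier G"
  shows "a \<otimes> b [^] n \<otimes> inv a \<otimes> inv (b [^] n) =
     lprod G (map (\<lambda>k. b [^] k \<otimes> (a \<otimes> b \<otimes> inv a \<otimes> inv b) \<otimes> inv (b [^] k)) [0..<n])"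
proof (induct n)
  case 0 then show ?case using a by simp
next
  case (Suc n)
  have "lprod G (map (\<lambda>k. b [^] k \<otimes> (a \<otimes> b \<otimes> inv a \<otimes> inv b) \<otimes> inv (b [^] k)) [0..<Suc n])
     = lprod G (map (\<lambda>k. b [^] k \<otimes> (a \<otimes> b \<otimes> inv a \<otimes> inv b) \<otimes> inv (b [^] k)) [0..<n])
       \<otimes> (b [^] n \<otimes> (a \<otimes> b \<otimes> inv a \<otimes> inv b) \<otimes> inv (b [^] n))"
    using a b by (simp add: lprod_append image_subset_iff)
  also have "\<dots> = (a \<otimes> b [^] n \<otimes> inv a \<otimes> inv (b [^] n))
       \<otimes> (b [^] n \<otimes> (a \<otimes> b \<otimes> inv a \<otimes> inv b) \<otimes> inv (b [^] n))"
    using Suc by simp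
  also have "\<dots> = a \<otimes> b [^] Suc n \<otimes> inv a \<otimes> inv (b [^] Suc n)"
    using a b by (simp add: m_assoc inv_mult_group)
  finally show ?case by simp
qed

lemma comm_pow_identity2:
  assumes a: "a \<in> carrier G" and b: "b \<in> carrier G"
  shows "a [^] i \<otimes> b [^] n \<otimes> inv (a [^] i) \<otimes> inv (b [^] n) =
     lprod G (concat (map (\<lambda>m. map (\<lambda>k. a [^] m \<otimes> b [^] k \<otimes> (a \<otimes> b \<otimes> inv a \<otimes> inv b)
        \<otimes> inv (b [^] k) \<otimes> inv (a [^] m)) [0..<n]) (rev [0..<i])))"
proof (induct i)
  case 0 then show ?case using a b by simp
next
  case (Suc i)
  let ?c = "a \<otimes> b \<otimes> inv a \<otimes> inv b"
  let ?T = "\<lambda>m k. a [^] m \<otimes> b [^] k \<otimes> ?c \<otimes> inv (b [^] k) \<otimes> inv (a [^] m)"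
  have cc: "?c \<in> carrier G" using a b by simp
  have pt: "\<And>k::nat. ?T i k = a [^] i \<otimes> (b [^] k \<otimes> ?c \<otimes> inv (b [^] k)) \<otimes> inv (a [^] i)"
    using a b cc by (simp add: m_assoc nat_pow_closed)
  have me: "map (?T i) [0..<n] = map (\<lambda>y. a [^] i \<otimes> y \<otimes> inv (a [^] i))
          (map (\<lambda>k. b [^] k \<otimes> ?c \<otimes> inv (b [^] k)) [0..<n])"
    by (simp only: pt map_map o_def)
  have "lprod G (map (\<lambda>y. a [^] i \<otimes> y \<otimes> inv (a [^] i))
          (map (\<lambda>k. b [^] k \<otimes> ?c \<otimes> inv (b [^] k)) [0..<n]))
      = a [^] i \<otimes> lprod G (map (\<lambda>k. b [^] k \<otimes> ?c \<otimes> inv (b [^] k)) [0..<n]) \<otimes> inv (a [^] i)"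
    using a b cc by (subst lprod_conj) auto
  then have "lprod G (map (?T i) [0..<n]) = a [^] i \<otimes> (a \<otimes> b [^] n \<otimes> inv a \<otimes> inv (b [^] n)) \<otimes> inv (a [^] i)"
    unfolding me using comm_pow_identity[OF a b, of n] by simp
  moreover have "lprod G (concat (map (\<lambda>m. map (?T m) [0..<n]) (rev [0..<Suc i])))
     = lprod G (map (?T i) [0..<n]) \<otimes> lprod G (concat (map (\<lambda>m. map (?T m) [0..<n]) (rev [0..<i])))"
    using a b by (simp, intro lprod_append) auto
  ultimately have "lprod G (concat (map (\<lambda>m. map (?T m) [0..<n]) (rev [0..<Suc i])))
     = a [^] i \<otimes> (a \<otimes> b [^] n \<otimes> inv a \<otimes> inv (b [^] n)) \<otimes> inv (a [^] i)
       \<otimes> (a [^] i \<otimes> b [^] n \<otimes> inv (a [^] i) \<otimes> inv (b [^] n))"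
    using Suc by simp
  also have "\<dots> = a [^] Suc i \<otimes> b [^] n \<otimes> inv (a [^] Suc i) \<otimes> inv (b [^] n)"
    using a b by (simp add: m_assoc inv_mult_group)
  finally show ?case by simp
qed

end


context group
begin

lemma schreier_id1:
  assumes a: "a \<in> carrier G" and b: "b \<in> carrier G"
  shows "a [^] (i::nat) \<otimes> b [^] (j::nat) \<otimes> a \<otimes> inv (a [^] Suc i \<otimes> b [^] j)
       = inv (a [^] i \<otimes> (a \<otimes> b [^] j \<otimes> inv a \<otimes> inv (b [^] j)) \<otimes> inv (a [^] i))"
  using a b by (simp add: m_assoc inv_mult_group nat_pow_closed)

lemma schreier_id2:
  assumes a: "a \<in> carrier G" and b: "b \<in> carrier G"
  shows "a [^] (i::nat) \<otimes> b [^] (j::nat) \<otimes> a \<otimes> inv (a [^] (0::nat) \<otimes> b [^] j)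
       = inv (a [^] i \<otimes> (a \<otimes> b [^] j \<otimes> inv a \<otimes> inv (b [^] j)) \<otimes> inv (a [^] i)) \<otimes> a [^] Suc i"
  using a b by (simp add: m_assoc inv_mult_group nat_pow_closed)

lemma schreier_id3:
  assumes a: "a \<in> carrier G" and b: "b \<in> carrier G"
  shows "a [^] (i::nat) \<otimes> b [^] (j::nat) \<otimes> b \<otimes> inv (a [^] i \<otimes> b [^] Suc j) = \<one>"
  using a b by (simp add: m_assoc inv_mult_group nat_pow_closed)

lemma schreier_id4:
  assumes a: "a \<in> carrier G" and b: "b \<in> carrier G"
  shows "a [^] (i::nat) \<otimes> b [^] (j::nat) \<otimes> b \<otimes> inv (a [^] i \<otimes> b [^] (0::nat))
     = (a [^] i \<otimes> b [^] Suc j \<otimes> inv (a [^] i) \<otimes> inv (b [^] Suc j)) \<otimes> b [^] Suc j"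
  using a b by (simp add: m_assoc inv_mult_group nat_pow_closed)

lemma conj_comm_identity:
  assumes a: "a \<in> carrier G" and b: "b \<in> carrier G"
  shows "a [^] (i::nat) \<otimes> (a \<otimes> b [^] (j::nat) \<otimes> inv a \<otimes> inv (b [^] j)) \<otimes> inv (a [^] i)
    = lprod G (map (\<lambda>k. a [^] i \<otimes> b [^] k \<otimes> (a \<otimes> b \<otimes> inv a \<otimes> inv b) \<otimes> inv (b [^] k) \<otimes> inv (a [^] i)) [0..<j])"
proof -
  let ?c = "a \<otimes> b \<otimes> inv a \<otimes> inv b"
  have cc: "?c \<in> carrier G" using a b by simp
  have pt: "\<And>k::nat. a [^] i \<otimes> b [^] k \<otimes> ?c \<otimes> inv (b [^] k) \<otimes> inv (a [^] i)
     = a [^] i \<otimes> (b [^] k \<otimes> ?c \<otimes> inv (b [^] k)) \<otimes> inv (a [^] i)"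
    using a b cc by (simp add: m_assoc nat_pow_closed)
  have "lprod G (map (\<lambda>y. a [^] i \<otimes> y \<otimes> inv (a [^] i))
          (map (\<lambda>k. b [^] k \<otimes> ?c \<otimes> inv (b [^] k)) [0..<j]))
      = a [^] i \<otimes> lprod G (map (\<lambda>k. b [^] k \<otimes> ?c \<otimes> inv (b [^] k)) [0..<j]) \<otimes> inv (a [^] i)"
    using a b cc by (subst lprod_conj) auto
  then show ?thesis
    by (simp only: pt map_map o_def comm_pow_identity[OF a b])
qed

end

lemma group_Gamma2: "group Gamma2"
  unfolding Gamma2_def by (rule group_FG)

interpretation G2: group Gamma2
  by (rule group_Gamma2)

lemma G2_carrier: "w \<in> carrier Gamma2 \<longleftrightarrow> red w = w"
  by (simp add: Gamma2_def FG_carrier)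

lemma G2_red_in[simp]: "red w \<in> carrier Gamma2"
  by (simp add: G2_carrier)

lemma G2_red_mult: "red u \<otimes>\<^bsub>Gamma2\<^esub> red v = red (u @ v)"
  by (simp add: Gamma2_def FG_red_mult)

lemma G2_one: "\<one>\<^bsub>Gamma2\<^esub> = []"
  by (simp add: Gamma2_def FG_one)

lemma G2_inv_red: "inv\<^bsub>Gamma2\<^esub> (red w) = red (winv w)"
  unfolding Gamma2_def by (rule FG_inv_red) simp

lemma gen_word_red: "gen_word g = red [(g, False)]"
  by (simp add: gen_word_def red_Cons cons_red_def)

lemma gen_word_G2[simp]: "gen_word (g::ab) \<in> carrier Gamma2"
  by (simp add: gen_word_red)

lemma G2_pow: "gen_word g [^]\<^bsub>Gamma2\<^esub> (n::nat) = red (replicate n (g, False))"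
proof (induct n)
  case 0 then show ?case by (simp add: G2_one)
next
  case (Suc n)
  have "gen_word g [^]\<^bsub>Gamma2\<^esub> Suc n = red (replicate n (g, False)) \<otimes>\<^bsub>Gamma2\<^esub> red [(g, False)]"
    using Suc by (simp add: gen_word_red[symmetric])
  also have "\<dots> = red (replicate (Suc n) (g, False))"
    by (simp add: G2_red_mult replicate_append_same[symmetric] del: replicate_append_same)
  finally show ?case .
qed

lemma winv_replicate: "winv (replicate n (g, e)) = replicate n (g, \<not> e)"
  by (simp add: winv_def flipl_def)

lemma G2_inv_pow: "inv\<^bsub>Gamma2\<^esub> (gen_word g [^]\<^bsub>Gamma2\<^esub> (n::nat)) = red (replicate n (g, True))"
  by (simp add: G2_pow G2_inv_red winv_replicate)

lemma G2_inv_gen: "inv\<^bsub>Gamma2\<^esub> (gen_word g) = red [(g, True)]"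
  by (simp add: gen_word_red G2_inv_red winv_def flipl_def)

definition cw :: "(ab \<times> bool) list" where
  "cw = [(GA, False), (GB, False), (GA, True), (GB, True)]"

lemma Cmat_red: "Cmat = red cw"
  by (simp add: Cmat_def gen_word_red G2_red_mult cw_def G2_inv_red winv_def flipl_def)

definition tw :: "nat \<Rightarrow> nat \<Rightarrow> (ab \<times> bool) list" where
  "tw i j = replicate i (GA, False) @ replicate j (GB, False) @ cw @ replicate j (GB, True) @ replicate i (GA, True)"

lemma Tconj_red: "Tconj i j = red (tw i j)"
  by (simp add: Tconj_def tw_def G2_pow G2_inv_red winv_replicate Cmat_red G2_red_mult)

lemma Tconj_G2[simp]: "Tconj i j \<in> carrier Gamma2"
  by (simp add: Tconj_red)

lemma Phi_iff: "w \<in> Phi N \<longleftrightarrow> red w = w \<and> int N dvd expsum GA w \<and> int N dvd expsum GB w"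
  by (auto simp: Phi_def to_ZN2_def G2_carrier dvd_eq_mod_eq_0)

lemma Phi_subgroup: "subgroup (Phi N) Gamma2"
proof (rule G2.subgroupI)
  show "Phi N \<subseteq> carrier Gamma2" by (auto simp: Phi_iff G2_carrier)
  show "Phi N \<noteq> {}"
  proof -
    have "[] \<in> Phi N" by (simp add: Phi_iff)
    then show ?thesis by blast
  qed
next
  fix a assume "a \<in> Phi N"
  then show "inv\<^bsub>Gamma2\<^esub> a \<in> Phi N"
    by (auto simp: Phi_iff) (metis G2_inv_red expsum_red expsum_winv red_red dvd_minus_iff)+
next
  fix a b assume "a \<in> Phi N" "b \<in> Phi N"
  then show "a \<otimes>\<^bsub>Gamma2\<^esub> b \<in> Phi N"
    by (auto simp: Phi_iff) (metis G2_red_mult expsum_red expsum_append red_red dvd_add)+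
qed


section \<open>Generation of Phi\<close>

lemma nat_mod_succ:
  assumes "N \<ge> 1"
  shows "nat ((p + 1) mod int N) = (if nat (p mod int N) = N - 1 then 0 else Suc (nat (p mod int N)))"
proof -
  define r where "r = p mod int N"
  have r: "0 \<le> r" "r < int N" using assms by (auto simp: r_def)
  have e: "(p + 1) mod int N = (r + 1) mod int N" by (simp add: r_def mod_add_left_eq)
  show ?thesis
  proof (cases "r + 1 = int N")
    case True
    then have "nat (p mod int N) = N - 1" using r r_def by auto
    moreover have "(p + 1) mod int N = 0" using e True by simp
    ultimately show ?thesis by simp
  next
    case False
    then have "r + 1 < int N" using r by simp
    then have "(p + 1) mod int N = r + 1" using e r by simp
    moreover have "nat (p mod int N) \<noteq> N - 1" using False r r_def by auto
    ultimately show ?thesis using r r_def by (simp add: nat_add_distrib)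
  qed
qed

lemma nat_mod_less: "N \<ge> 1 \<Longrightarrow> nat (p mod int N) < N"
  by (simp add: nat_less_iff)

definition tr :: "nat \<Rightarrow> int \<Rightarrow> int \<Rightarrow> (ab \<times> bool) list" where
  "tr N p q = Amat [^]\<^bsub>Gamma2\<^esub> nat (p mod int N) \<otimes>\<^bsub>Gamma2\<^esub> Bmat [^]\<^bsub>Gamma2\<^esub> nat (q mod int N)"

lemma tr_G2[simp]: "tr N p q \<in> carrier Gamma2"
  by (simp add: tr_def)

lemma genU_G2: "genU N \<subseteq> carrier Gamma2"
  by (auto simp: genU_def)

lemma H_subgroup: "subgroup (generate Gamma2 (genU N)) Gamma2"
  by (rule G2.generate_is_subgroup[OF genU_G2])

lemma Tconj_H: "i < N \<Longrightarrow> k < N \<Longrightarrow> Tconj i k \<in> generate Gamma2 (genU N)"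
  by (rule generate.incl) (auto simp: genU_def)

lemma AN_H: "Amat [^]\<^bsub>Gamma2\<^esub> N \<in> generate Gamma2 (genU N)"
  by (rule generate.incl) (auto simp: genU_def)

lemma BN_H: "Bmat [^]\<^bsub>Gamma2\<^esub> N \<in> generate Gamma2 (genU N)"
  by (rule generate.incl) (auto simp: genU_def)

lemma Z_H:
  assumes "i < N" "j \<le> N"
  shows "Amat [^]\<^bsub>Gamma2\<^esub> i \<otimes>\<^bsub>Gamma2\<^esub> (Amat \<otimes>\<^bsub>Gamma2\<^esub> Bmat [^]\<^bsub>Gamma2\<^esub> j
     \<otimes>\<^bsub>Gamma2\<^esub> inv\<^bsub>Gamma2\<^esub> Amat \<otimes>\<^bsub>Gamma2\<^esub> inv\<^bsub>Gamma2\<^esub> (Bmat [^]\<^bsub>Gamma2\<^esub> j))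
     \<otimes>\<^bsub>Gamma2\<^esub> inv\<^bsub>Gamma2\<^esub> (Amat [^]\<^bsub>Gamma2\<^esub> i) \<in> generate Gamma2 (genU N)"
proof -
  have "Amat [^]\<^bsub>Gamma2\<^esub> i \<otimes>\<^bsub>Gamma2\<^esub> (Amat \<otimes>\<^bsub>Gamma2\<^esub> Bmat [^]\<^bsub>Gamma2\<^esub> j
     \<otimes>\<^bsub>Gamma2\<^esub> inv\<^bsub>Gamma2\<^esub> Amat \<otimes>\<^bsub>Gamma2\<^esub> inv\<^bsub>Gamma2\<^esub> (Bmat [^]\<^bsub>Gamma2\<^esub> j))
     \<otimes>\<^bsub>Gamma2\<^esub> inv\<^bsub>Gamma2\<^esub> (Amat [^]\<^bsub>Gamma2\<^esub> i) = lprod Gamma2 (map (\<lambda>k. Tconj i k) [0..<j])"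
    unfolding Tconj_def Cmat_def by (rule G2.conj_comm_identity) simp_all
  also have "\<dots> \<in> generate Gamma2 (genU N)"
    using assms by (intro G2.lprod_subgroup[OF H_subgroup]) (auto intro: Tconj_H)
  finally show ?thesis .
qed

lemma F_H:
  assumes "i < N"
  shows "Amat [^]\<^bsub>Gamma2\<^esub> i \<otimes>\<^bsub>Gamma2\<^esub> Bmat [^]\<^bsub>Gamma2\<^esub> N
     \<otimes>\<^bsub>Gamma2\<^esub> inv\<^bsub>Gamma2\<^esub> (Amat [^]\<^bsub>Gamma2\<^esub> i) \<otimes>\<^bsub>Gamma2\<^esub> inv\<^bsub>Gamma2\<^esub> (Bmat [^]\<^bsub>Gamma2\<^esub> N)
     \<in> generate Gamma2 (genU N)"
proof -
  have "Amat [^]\<^bsub>Gamma2\<^esub> i \<otimes>\<^bsub>Gamma2\<^esub> Bmat [^]\<^bsub>Gamma2\<^esub> N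
     \<otimes>\<^bsub>Gamma2\<^esub> inv\<^bsub>Gamma2\<^esub> (Amat [^]\<^bsub>Gamma2\<^esub> i) \<otimes>\<^bsub>Gamma2\<^esub> inv\<^bsub>Gamma2\<^esub> (Bmat [^]\<^bsub>Gamma2\<^esub> N)
     = lprod Gamma2 (concat (map (\<lambda>m. map (\<lambda>k. Tconj m k) [0..<N]) (rev [0..<i])))"
    unfolding Tconj_def Cmat_def by (rule G2.comm_pow_identity2) simp_all
  also have "\<dots> \<in> generate Gamma2 (genU N)"
    using assms by (intro G2.lprod_subgroup[OF H_subgroup]) (auto intro: Tconj_H)
  finally show ?thesis .
qed

lemma schreier_A:
  assumes N: "N \<ge> 1"
  shows "tr N p q \<otimes>\<^bsub>Gamma2\<^esub> Amat \<otimes>\<^bsub>Gamma2\<^esub> inv\<^bsub>Gamma2\<^esub> (tr N (p + 1) q) \<in> generate Gamma2 (genU N)"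
proof -
  let ?H = "generate Gamma2 (genU N)"
  interpret H: subgroup ?H Gamma2 by (rule H_subgroup)
  define i where "i = nat (p mod int N)"
  define j where "j = nat (q mod int N)"
  have ij: "i < N" "j < N" using N by (auto simp: i_def j_def nat_mod_less)
  show ?thesis
  proof (cases "i = N - 1")
    case True
    then have "tr N (p + 1) q = Amat [^]\<^bsub>Gamma2\<^esub> (0::nat) \<otimes>\<^bsub>Gamma2\<^esub> Bmat [^]\<^bsub>Gamma2\<^esub> j"
      using nat_mod_succ[OF N, of p] by (simp add: tr_def i_def j_def)
    moreover have "tr N p q = Amat [^]\<^bsub>Gamma2\<^esub> i \<otimes>\<^bsub>Gamma2\<^esub> Bmat [^]\<^bsub>Gamma2\<^esub> j"
      by (simp add: tr_def i_def j_def)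
    ultimately have "tr N p q \<otimes>\<^bsub>Gamma2\<^esub> Amat \<otimes>\<^bsub>Gamma2\<^esub> inv\<^bsub>Gamma2\<^esub> (tr N (p + 1) q)
       = inv\<^bsub>Gamma2\<^esub> (Amat [^]\<^bsub>Gamma2\<^esub> i \<otimes>\<^bsub>Gamma2\<^esub> (Amat \<otimes>\<^bsub>Gamma2\<^esub> Bmat [^]\<^bsub>Gamma2\<^esub> j
     \<otimes>\<^bsub>Gamma2\<^esub> inv\<^bsub>Gamma2\<^esub> Amat \<otimes>\<^bsub>Gamma2\<^esub> inv\<^bsub>Gamma2\<^esub> (Bmat [^]\<^bsub>Gamma2\<^esub> j))
     \<otimes>\<^bsub>Gamma2\<^esub> inv\<^bsub>Gamma2\<^esub> (Amat [^]\<^bsub>Gamma2\<^esub> i)) \<otimes>\<^bsub>Gamma2\<^esub> Amat [^]\<^bsub>Gamma2\<^esub> Suc i"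
      by (simp only: G2.schreier_id2[OF gen_word_G2 gen_word_G2])
    also have "\<dots> \<in> ?H"
      using Z_H[of i N j] ij True N AN_H[of N] by (auto intro!: H.m_closed H.m_inv_closed)
    finally show ?thesis .
  next
    case False
    then have "tr N (p + 1) q = Amat [^]\<^bsub>Gamma2\<^esub> Suc i \<otimes>\<^bsub>Gamma2\<^esub> Bmat [^]\<^bsub>Gamma2\<^esub> j"
      using nat_mod_succ[OF N, of p] by (simp add: tr_def i_def j_def)
    moreover have "tr N p q = Amat [^]\<^bsub>Gamma2\<^esub> i \<otimes>\<^bsub>Gamma2\<^esub> Bmat [^]\<^bsub>Gamma2\<^esub> j"
      by (simp add: tr_def i_def j_def)
    ultimately have "tr N p q \<otimes>\<^bsub>Gamma2\<^esub> Amat \<otimes>\<^bsub>Gamma2\<^esub> inv\<^bsub>Gamma2\<^esub> (tr N (p + 1) q)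
       = inv\<^bsub>Gamma2\<^esub> (Amat [^]\<^bsub>Gamma2\<^esub> i \<otimes>\<^bsub>Gamma2\<^esub> (Amat \<otimes>\<^bsub>Gamma2\<^esub> Bmat [^]\<^bsub>Gamma2\<^esub> j
     \<otimes>\<^bsub>Gamma2\<^esub> inv\<^bsub>Gamma2\<^esub> Amat \<otimes>\<^bsub>Gamma2\<^esub> inv\<^bsub>Gamma2\<^esub> (Bmat [^]\<^bsub>Gamma2\<^esub> j))
     \<otimes>\<^bsub>Gamma2\<^esub> inv\<^bsub>Gamma2\<^esub> (Amat [^]\<^bsub>Gamma2\<^esub> i))"
      by (simp only: G2.schreier_id1[OF gen_word_G2 gen_word_G2])
    also have "\<dots> \<in> ?H"
      using Z_H[of i N j] ij by (auto intro!: H.m_inv_closed)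
    finally show ?thesis .
  qed
qed

lemma schreier_B:
  assumes N: "N \<ge> 1"
  shows "tr N p q \<otimes>\<^bsub>Gamma2\<^esub> Bmat \<otimes>\<^bsub>Gamma2\<^esub> inv\<^bsub>Gamma2\<^esub> (tr N p (q + 1)) \<in> generate Gamma2 (genU N)"
proof -
  let ?H = "generate Gamma2 (genU N)"
  interpret H: subgroup ?H Gamma2 by (rule H_subgroup)
  define i where "i = nat (p mod int N)"
  define j where "j = nat (q mod int N)"
  have ij: "i < N" "j < N" using N by (auto simp: i_def j_def nat_mod_less)
  have t: "tr N p q = Amat [^]\<^bsub>Gamma2\<^esub> i \<otimes>\<^bsub>Gamma2\<^esub> Bmat [^]\<^bsub>Gamma2\<^esub> j"
    by (simp add: tr_def i_def j_def)
  show ?thesis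
  proof (cases "j = N - 1")
    case True
    then have "tr N p (q + 1) = Amat [^]\<^bsub>Gamma2\<^esub> i \<otimes>\<^bsub>Gamma2\<^esub> Bmat [^]\<^bsub>Gamma2\<^esub> (0::nat)"
      using nat_mod_succ[OF N, of q] by (simp add: tr_def i_def j_def)
    then have "tr N p q \<otimes>\<^bsub>Gamma2\<^esub> Bmat \<otimes>\<^bsub>Gamma2\<^esub> inv\<^bsub>Gamma2\<^esub> (tr N p (q + 1))
       = (Amat [^]\<^bsub>Gamma2\<^esub> i \<otimes>\<^bsub>Gamma2\<^esub> Bmat [^]\<^bsub>Gamma2\<^esub> Suc j
     \<otimes>\<^bsub>Gamma2\<^esub> inv\<^bsub>Gamma2\<^esub> (Amat [^]\<^bsub>Gamma2\<^esub> i) \<otimes>\<^bsub>Gamma2\<^esub> inv\<^bsub>Gamma2\<^esub> (Bmat [^]\<^bsub>Gamma2\<^esub> Suc j))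
     \<otimes>\<^bsub>Gamma2\<^esub> Bmat [^]\<^bsub>Gamma2\<^esub> Suc j"
      unfolding t by (simp only: G2.schreier_id4[OF gen_word_G2 gen_word_G2])
    also have "\<dots> \<in> ?H"
      using F_H[of i N] ij True N BN_H[of N] by (auto intro!: H.m_closed)
    finally show ?thesis .
  next
    case False
    then have "tr N p (q + 1) = Amat [^]\<^bsub>Gamma2\<^esub> i \<otimes>\<^bsub>Gamma2\<^esub> Bmat [^]\<^bsub>Gamma2\<^esub> Suc j"
      using nat_mod_succ[OF N, of q] by (simp add: tr_def i_def j_def)
    then have "tr N p q \<otimes>\<^bsub>Gamma2\<^esub> Bmat \<otimes>\<^bsub>Gamma2\<^esub> inv\<^bsub>Gamma2\<^esub> (tr N p (q + 1)) = \<one>\<^bsub>Gamma2\<^esub>"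
      unfolding t by (simp only: G2.schreier_id3[OF gen_word_G2 gen_word_G2])
    then show ?thesis by simp
  qed
qed

lemma coset_decomp:
  assumes N: "N \<ge> 1"
  shows "\<exists>h\<in>generate Gamma2 (genU N). red w = h \<otimes>\<^bsub>Gamma2\<^esub> tr N (expsum GA w) (expsum GB w)"
proof (induct w rule: rev_induct)
  case Nil
  have "tr N 0 0 = \<one>\<^bsub>Gamma2\<^esub>" by (simp add: tr_def)
  then have "red [] = \<one>\<^bsub>Gamma2\<^esub> \<otimes>\<^bsub>Gamma2\<^esub> tr N (expsum GA []) (expsum GB [])"
    by (simp only: expsum_Nil G2.l_one G2.one_closed) (simp add: G2_one)
  then show ?case by (intro bexI[of _ "\<one>\<^bsub>Gamma2\<^esub>"] generate.one)
next
  case (snoc l w)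
  let ?H = "generate Gamma2 (genU N)"
  interpret H: subgroup ?H Gamma2 by (rule H_subgroup)
  from snoc obtain h where h: "h \<in> ?H" "red w = h \<otimes>\<^bsub>Gamma2\<^esub> tr N (expsum GA w) (expsum GB w)" by blast
  let ?t = "tr N (expsum GA w) (expsum GB w)"
  let ?t' = "tr N (expsum GA (w @ [l])) (expsum GB (w @ [l]))"
  have hc: "h \<in> carrier Gamma2" using h(1) H.subset by blast
  have L: "red [l] \<in> carrier Gamma2" by simp
  have s: "?t \<otimes>\<^bsub>Gamma2\<^esub> red [l] \<otimes>\<^bsub>Gamma2\<^esub> inv\<^bsub>Gamma2\<^esub> ?t' \<in> ?H"
  proof -
    obtain x e where l: "l = (x, e)" by (cases l)
    show ?thesis
    proof (cases e)
      case False
      then show ?thesis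
      proof (cases x)
        case GA then show ?thesis using schreier_A[OF N] l False by (simp add: gen_word_red[symmetric])
      next
        case GB then show ?thesis using schreier_B[OF N] l False by (simp add: gen_word_red[symmetric])
      qed
    next
      case True
      have rl: "red [l] = inv\<^bsub>Gamma2\<^esub> (gen_word x)" using l True by (simp add: G2_inv_gen)
      have gen: "\<And>u v. u \<in> carrier Gamma2 \<Longrightarrow> v \<in> carrier Gamma2 \<Longrightarrow>
          u \<otimes>\<^bsub>Gamma2\<^esub> inv\<^bsub>Gamma2\<^esub> (gen_word x) \<otimes>\<^bsub>Gamma2\<^esub> inv\<^bsub>Gamma2\<^esub> v
        = inv\<^bsub>Gamma2\<^esub> (v \<otimes>\<^bsub>Gamma2\<^esub> gen_word x \<otimes>\<^bsub>Gamma2\<^esub> inv\<^bsub>Gamma2\<^esub> u)"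
        by (simp add: G2.inv_mult_group G2.m_assoc)
      show ?thesis
      proof (cases x)
        case GA
        have "?t' \<otimes>\<^bsub>Gamma2\<^esub> gen_word x \<otimes>\<^bsub>Gamma2\<^esub> inv\<^bsub>Gamma2\<^esub> ?t \<in> ?H"
          using schreier_A[OF N, of "expsum GA w - 1" "expsum GB w"] l True GA by simp
        then show ?thesis unfolding rl using gen by (simp add: H.m_inv_closed)
      next
        case GB
        have "?t' \<otimes>\<^bsub>Gamma2\<^esub> gen_word x \<otimes>\<^bsub>Gamma2\<^esub> inv\<^bsub>Gamma2\<^esub> ?t \<in> ?H"
          using schreier_B[OF N, of "expsum GA w" "expsum GB w - 1"] l True GB by simp
        then show ?thesis unfolding rl using gen by (simp add: H.m_inv_closed)
      qed
    qed
  qed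
  have "red (w @ [l]) = red w \<otimes>\<^bsub>Gamma2\<^esub> red [l]" by (simp add: G2_red_mult)
  also have "\<dots> = (h \<otimes>\<^bsub>Gamma2\<^esub> (?t \<otimes>\<^bsub>Gamma2\<^esub> red [l] \<otimes>\<^bsub>Gamma2\<^esub> inv\<^bsub>Gamma2\<^esub> ?t')) \<otimes>\<^bsub>Gamma2\<^esub> ?t'"
    using h(2) hc L by (simp add: G2.m_assoc)
  finally show ?case using s h(1) by (blast intro: H.m_closed)
qed

lemma genU_Phi: "genU N \<subseteq> Phi N"
  by (auto simp: genU_def Phi_iff G2_pow Tconj_red tw_def cw_def)

lemma generate_eq_Phi:
  assumes N: "N \<ge> 1"
  shows "generate Gamma2 (genU N) = Phi N"
proof
  show "generate Gamma2 (genU N) \<subseteq> Phi N"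
    by (rule G2.generate_subgroup_incl[OF genU_Phi Phi_subgroup])
next
  show "Phi N \<subseteq> generate Gamma2 (genU N)"
  proof
    fix w assume w: "w \<in> Phi N"
    then have w': "red w = w" "int N dvd expsum GA w" "int N dvd expsum GB w" by (auto simp: Phi_iff)
    obtain h where h: "h \<in> generate Gamma2 (genU N)" "red w = h \<otimes>\<^bsub>Gamma2\<^esub> tr N (expsum GA w) (expsum GB w)"
      using coset_decomp[OF N] by blast
    have "tr N (expsum GA w) (expsum GB w) = \<one>\<^bsub>Gamma2\<^esub>"
      using w' by (simp add: tr_def dvd_eq_mod_eq_0)
    moreover have "h \<in> carrier Gamma2" using h(1) subgroup.subset[OF H_subgroup] by blast
    ultimately show "w \<in> generate Gamma2 (genU N)" using h w' by simp
  qed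
qed


section \<open>The Reidemeister-Schreier cocycle\<close>

definition dA :: "ab \<Rightarrow> int" where "dA x = (if x = GA then 1 else 0)"
definition dB :: "ab \<Rightarrow> int" where "dB x = (if x = GB then 1 else 0)"

lemma dA_simps[simp]: "dA GA = 1" "dA GB = 0" by (simp_all add: dA_def)
lemma dB_simps[simp]: "dB GA = 0" "dB GB = 1" by (simp_all add: dB_def)

fun Sig :: "('a, 'b) monoid_scheme \<Rightarrow> (int \<Rightarrow> int \<Rightarrow> ab \<Rightarrow> 'a) \<Rightarrow> int \<Rightarrow> int \<Rightarrow> (ab \<times> bool) list \<Rightarrow> 'a" where
  "Sig K s p q [] = \<one>\<^bsub>K\<^esub>"
| "Sig K s p q (l # w) =
    (if snd l then inv\<^bsub>K\<^esub> (s (p - dA (fst l)) (q - dB (fst l)) (fst l))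
                  \<otimes>\<^bsub>K\<^esub> Sig K s (p - dA (fst l)) (q - dB (fst l)) w
     else s p q (fst l) \<otimes>\<^bsub>K\<^esub> Sig K s (p + dA (fst l)) (q + dB (fst l)) w)"

declare Sig.simps(2)[simp del]

lemma expsum_Cons_A: "expsum GA (l # w) = (if snd l then - dA (fst l) else dA (fst l)) + expsum GA w"
  by (cases "fst l") (auto simp: dA_def)

lemma expsum_Cons_B: "expsum GB (l # w) = (if snd l then - dB (fst l) else dB (fst l)) + expsum GB w"
  by (cases "fst l") (auto simp: dB_def)

context group
begin

lemma Sig_closed:
  assumes "\<And>p q x. s p q x \<in> carrier G"
  shows "Sig G s p q w \<in> carrier G"
  using assms by (induct w arbitrary: p q) (auto simp: Sig.simps(2))

lemma Sig_append:
  assumes sc: "\<And>p q x. s p q x \<in> carrier G"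
  shows "Sig G s p q (u @ v) = Sig G s p q u \<otimes> Sig G s (p + expsum GA u) (q + expsum GB u) v"
proof (induct u arbitrary: p q)
  case Nil then show ?case using Sig_closed[OF sc] by simp
next
  case (Cons l u)
  show ?case
  proof (cases "snd l")
    case True
    have e: "p - dA (fst l) + expsum GA u = p + expsum GA (l # u)"
            "q - dB (fst l) + expsum GB u = q + expsum GB (l # u)"
      using True by (simp_all del: expsum_Cons add: expsum_Cons_A expsum_Cons_B)
    show ?thesis using True Cons[of "p - dA (fst l)" "q - dB (fst l)"] sc Sig_closed[OF sc]
      by (simp add: Sig.simps(2) m_assoc e)
  next
    case False
    have e: "p + dA (fst l) + expsum GA u = p + expsum GA (l # u)"
            "q + dB (fst l) + expsum GB u = q + expsum GB (l # u)"
      using False by (simp_all del: expsum_Cons add: expsum_Cons_A expsum_Cons_B)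
    show ?thesis using False Cons[of "p + dA (fst l)" "q + dB (fst l)"] sc Sig_closed[OF sc]
      by (simp add: Sig.simps(2) m_assoc e)
  qed
qed

lemma Sig_cons_red:
  assumes sc: "\<And>p q x. s p q x \<in> carrier G"
  shows "Sig G s p q (cons_red x r) = Sig G s p q (x # r)"
proof (cases r)
  case Nil then show ?thesis by (simp add: cons_red_def)
next
  case (Cons y ys)
  show ?thesis
  proof (cases "fst y = fst x \<and> snd y \<noteq> snd x")
    case True
    then have "cons_red x r = ys" using Cons by (simp add: cons_red_def)
    moreover have "Sig G s p q (x # y # ys) = Sig G s p q ys"
      using True sc Sig_closed[OF sc] by (cases "snd x") (auto simp: Sig.simps(2))
    ultimately show ?thesis using Cons by simp
  next
    case False
    then have "cons_red x r = x # r" using Cons by (simp add: cons_red_def)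
    then show ?thesis by simp
  qed
qed

lemma Sig_red:
  assumes sc: "\<And>p q x. s p q x \<in> carrier G"
  shows "Sig G s p q (red w) = Sig G s p q w"
proof (induct w arbitrary: p q)
  case Nil then show ?case by simp
next
  case (Cons x w)
  have "Sig G s p q (red (x # w)) = Sig G s p q (x # red w)"
    by (simp add: red_Cons Sig_cons_red[OF sc])
  also have "\<dots> = Sig G s p q (x # w)"
    using Cons by (simp add: Sig.simps(2))
  finally show ?case .
qed

lemma Sig_mod:
  assumes per: "\<And>p q p' q' x. p mod (M::int) = p' mod M \<Longrightarrow> q mod M = q' mod M \<Longrightarrow> s p q x = s p' q' x"
  shows "p mod M = p' mod M \<Longrightarrow> q mod M = q' mod M \<Longrightarrow> Sig G s p q w = Sig G s p' q' w"
proof (induct w arbitrary: p q p' q')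
  case Nil then show ?case by simp
next
  case (Cons l w)
  have m1: "(p - dA (fst l)) mod M = (p' - dA (fst l)) mod M" "(q - dB (fst l)) mod M = (q' - dB (fst l)) mod M"
    "(p + dA (fst l)) mod M = (p' + dA (fst l)) mod M" "(q + dB (fst l)) mod M = (q' + dB (fst l)) mod M"
    using Cons(2,3) by (auto intro: mod_diff_cong mod_add_cong)
  show ?case
    using Cons(1)[OF m1(1,2)] Cons(1)[OF m1(3,4)] per[OF m1(1,2)] per[OF Cons(2,3)]
    by (simp add: Sig.simps(2))
qed

lemma Sig_rep_pos:
  assumes "\<And>k. k < n \<Longrightarrow> s (p + int k * dA x) (q + int k * dB x) x = \<one>"
    and sc: "\<And>p q x. s p q x \<in> carrier G"
  shows "Sig G s p q (replicate n (x, False)) = \<one>"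
  using assms(1)
proof (induct n arbitrary: p q)
  case 0 then show ?case by simp
next
  case (Suc n)
  have "Sig G s (p + dA x) (q + dB x) (replicate n (x, False)) = \<one>"
  proof (rule Suc(1))
    fix k assume "k < n"
    then show "s (p + dA x + int k * dA x) (q + dB x + int k * dB x) x = \<one>"
      using Suc(2)[of "Suc k"] by (simp add: algebra_simps)
  qed
  moreover have "s p q x = \<one>" using Suc(2)[of 0] by simp
  ultimately show ?case by (simp add: Sig.simps(2))
qed

lemma Sig_rep_neg:
  assumes "\<And>k. k < n \<Longrightarrow> s (p - int (Suc k) * dA x) (q - int (Suc k) * dB x) x = \<one>"
    and sc: "\<And>p q x. s p q x \<in> carrier G"
  shows "Sig G s p q (replicate n (x, True)) = \<one>"
  using assms(1)
proof (induct n arbitrary: p q)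
  case 0 then show ?case by simp
next
  case (Suc n)
  have "Sig G s (p - dA x) (q - dB x) (replicate n (x, True)) = \<one>"
  proof (rule Suc(1))
    fix k assume "k < n"
    then show "s (p - dA x - int (Suc k) * dA x) (q - dB x - int (Suc k) * dB x) x = \<one>"
      using Suc(2)[of "Suc k"] by (simp add: algebra_simps)
  qed
  moreover have "s (p - dA x) (q - dB x) x = \<one>" using Suc(2)[of 0] by simp
  ultimately show ?case by (simp add: Sig.simps(2))
qed

end


definition Qp :: "('a, 'b) monoid_scheme \<Rightarrow> (nat \<Rightarrow> nat \<Rightarrow> 'a) \<Rightarrow> nat \<Rightarrow> nat \<Rightarrow> 'a" where
  "Qp K t i j = lprod K (map (\<lambda>k. inv\<^bsub>K\<^esub> (t i k)) (rev [0..<j]))"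

definition Lp :: "('a, 'b) monoid_scheme \<Rightarrow> nat \<Rightarrow> (nat \<Rightarrow> nat \<Rightarrow> 'a) \<Rightarrow> nat \<Rightarrow> 'a" where
  "Lp K N t i = lprod K (map (t i) [0..<N])"

definition Fp :: "('a, 'b) monoid_scheme \<Rightarrow> nat \<Rightarrow> (nat \<Rightarrow> nat \<Rightarrow> 'a) \<Rightarrow> nat \<Rightarrow> 'a" where
  "Fp K N t i = lprod K (concat (map (\<lambda>m. map (t m) [0..<N]) (rev [0..<i])))"

definition sdef :: "('a, 'b) monoid_scheme \<Rightarrow> nat \<Rightarrow> 'a \<Rightarrow> 'a \<Rightarrow> (nat \<Rightarrow> nat \<Rightarrow> 'a) \<Rightarrow> int \<Rightarrow> int \<Rightarrow> ab \<Rightarrow> 'a" where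
  "sdef K N ta tb t p q x =
     (if x = GA then Qp K t (nat (p mod int N)) (nat (q mod int N)) \<otimes>\<^bsub>K\<^esub>
          (if nat (p mod int N) = N - 1 then ta else \<one>\<^bsub>K\<^esub>)
      else (if nat (q mod int N) = N - 1 then Fp K N t (nat (p mod int N)) \<otimes>\<^bsub>K\<^esub> tb else \<one>\<^bsub>K\<^esub>))"

lemma nat_int_mod: "k < N \<Longrightarrow> nat (int k mod int N) = k"
  by simp

lemma sdef_per: "p mod int N = p' mod int N \<Longrightarrow> q mod int N = q' mod int N \<Longrightarrow>
   sdef K N ta tb t p q x = sdef K N ta tb t p' q' x"
  by (simp add: sdef_def)

context group
begin

lemma Qp_closed[simp]: "(\<And>a b. t a b \<in> carrier G) \<Longrightarrow> Qp G t i j \<in> carrier G"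
  by (auto simp: Qp_def intro!: lprod_closed)

lemma Lp_closed[simp]: "(\<And>a b. t a b \<in> carrier G) \<Longrightarrow> Lp G N t i \<in> carrier G"
  by (auto simp: Lp_def intro!: lprod_closed)

lemma Fp_closed[simp]: "(\<And>a b. t a b \<in> carrier G) \<Longrightarrow> Fp G N t i \<in> carrier G"
  by (auto simp: Fp_def intro!: lprod_closed)

lemma sdef_closed: "(\<And>a b. t a b \<in> carrier G) \<Longrightarrow> ta \<in> carrier G \<Longrightarrow> tb \<in> carrier G \<Longrightarrow>
    sdef G N ta tb t p q x \<in> carrier G"
  by (simp add: sdef_def)

lemma Qp_0[simp]: "Qp G t i 0 = \<one>"
  by (simp add: Qp_def)

lemma Qp_Suc: "Qp G t i (Suc j) = inv (t i j) \<otimes> Qp G t i j"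
  by (simp add: Qp_def)

lemma Fp_0[simp]: "Fp G N t 0 = \<one>"
  by (simp add: Fp_def)

lemma Fp_Suc: "(\<And>a b. t a b \<in> carrier G) \<Longrightarrow> Fp G N t (Suc i) = Lp G N t i \<otimes> Fp G N t i"
  by (simp add: Fp_def Lp_def, intro lprod_append) auto

lemma Qp_L: "(\<And>a b. t a b \<in> carrier G) \<Longrightarrow> Qp G t i n \<otimes> lprod G (map (t i) [0..<n]) = \<one>"
proof (induct n)
  case 0 then show ?case by simp
next
  case (Suc n)
  have c: "Qp G t i n \<in> carrier G" "lprod G (map (t i) [0..<n]) \<in> carrier G" "t i n \<in> carrier G"
    using Suc(2) by (auto intro!: lprod_closed)
  have "lprod G (map (t i) [0..<Suc n]) = lprod G (map (t i) [0..<n]) \<otimes> t i n"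
    using Suc(2) by (simp, subst lprod_append) auto
  then have "Qp G t i (Suc n) \<otimes> lprod G (map (t i) [0..<Suc n])
     = inv (t i n) \<otimes> (Qp G t i n \<otimes> lprod G (map (t i) [0..<n])) \<otimes> t i n"
    using c by (simp add: Qp_Suc m_assoc)
  then show ?case using Suc c by simp
qed

lemma Qp_Lp:
  assumes tc: "\<And>a b. t a b \<in> carrier G" and N: "N \<ge> 1"
  shows "Qp G t i (N - 1) \<otimes> Lp G N t i = t i (N - 1)"
proof -
  have "[0..<N] = [0..<N - 1] @ [N - 1]" using N by (metis Suc_diff_1 less_le_trans upt_Suc_append zero_less_one zero_le)
  then have "Lp G N t i = lprod G (map (t i) [0..<N - 1]) \<otimes> t i (N - 1)"
    using tc by (simp add: Lp_def, subst lprod_append) auto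
  moreover have "Qp G t i (N - 1) \<otimes> lprod G (map (t i) [0..<N - 1]) = \<one>"
    by (rule Qp_L) (rule tc)
  moreover have "lprod G (map (t i) [0..<N - 1]) \<in> carrier G" using tc by (auto intro!: lprod_closed)
  ultimately show ?thesis using tc by (simp add: m_assoc[symmetric])
qed

end


context group
begin

lemma sd_A: "i < N \<Longrightarrow> j < N \<Longrightarrow>
   sdef G N ta tb t (int i) (int j) GA = Qp G t i j \<otimes> (if i = N - 1 then ta else \<one>)"
  by (simp add: sdef_def)

lemma sd_B: "i < N \<Longrightarrow> j < N \<Longrightarrow>
   sdef G N ta tb t (int i) (int j) GB = (if j = N - 1 then Fp G N t i \<otimes> tb else \<one>)"
  by (simp add: sdef_def)

lemma sd_A_succ: "N \<ge> 1 \<Longrightarrow> i < N \<Longrightarrow> j < N \<Longrightarrow>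
   sdef G N ta tb t (int i) (int j + 1) GA
     = Qp G t i (if j = N - 1 then 0 else Suc j) \<otimes> (if i = N - 1 then ta else \<one>)"
  using nat_mod_succ[of N "int j"] by (simp add: sdef_def)

lemma sd_B_succ: "N \<ge> 1 \<Longrightarrow> i < N \<Longrightarrow> j < N \<Longrightarrow>
   sdef G N ta tb t (int i + 1) (int j) GB
     = (if j = N - 1 then Fp G N t (if i = N - 1 then 0 else Suc i) \<otimes> tb else \<one>)"
  using nat_mod_succ[of N "int i"] by (simp add: sdef_def)

lemma Sig_AN:
  assumes tc: "\<And>a b. t a b \<in> carrier G" and ta: "ta \<in> carrier G" and tb: "tb \<in> carrier G"
    and N: "N \<ge> 1"
  shows "Sig G (sdef G N ta tb t) 0 0 (replicate N (GA, False)) = ta"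
proof -
  let ?s = "sdef G N ta tb t"
  have sc: "\<And>p q x. ?s p q x \<in> carrier G" by (rule sdef_closed) (simp_all add: tc ta tb)
  have r: "replicate N (GA, False) = replicate (N - 1) (GA, False) @ [(GA, False)]"
    using N by (metis Suc_diff_1 less_le_trans replicate_append_same replicate_Suc zero_less_one)
  have "Sig G ?s 0 0 (replicate (N - 1) (GA, False)) = \<one>"
  proof (rule Sig_rep_pos[OF _ sc])
    fix k assume "k < N - 1"
    then show "?s (0 + int k * dA GA) (0 + int k * dB GA) GA = \<one>"
      using sd_A[of k N 0 ta tb t] tc by simp
  qed
  moreover have "Sig G ?s (int (N - 1)) 0 [(GA, False)] = ta"
    using sd_A[of "N - 1" N 0 ta tb t] N ta tc sc by (simp add: Sig.simps(2))
  ultimately show ?thesis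
    using r sc ta by (simp add: Sig_append[OF sc])
qed

lemma Sig_BN:
  assumes tc: "\<And>a b. t a b \<in> carrier G" and ta: "ta \<in> carrier G" and tb: "tb \<in> carrier G"
    and N: "N \<ge> 1"
  shows "Sig G (sdef G N ta tb t) 0 0 (replicate N (GB, False)) = tb"
proof -
  let ?s = "sdef G N ta tb t"
  have sc: "\<And>p q x. ?s p q x \<in> carrier G" by (rule sdef_closed) (simp_all add: tc ta tb)
  have r: "replicate N (GB, False) = replicate (N - 1) (GB, False) @ [(GB, False)]"
    using N by (metis Suc_diff_1 less_le_trans replicate_append_same replicate_Suc zero_less_one)
  have "Sig G ?s 0 0 (replicate (N - 1) (GB, False)) = \<one>"
  proof (rule Sig_rep_pos[OF _ sc])
    fix k assume "k < N - 1"
    then show "?s (0 + int k * dA GB) (0 + int k * dB GB) GB = \<one>"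
      using sd_B[of 0 N k ta tb t] tc by simp
  qed
  moreover have "Sig G ?s 0 (int (N - 1)) [(GB, False)] = tb"
    using sd_B[of 0 N "N - 1" ta tb t] N tb tc sc by (simp add: Sig.simps(2))
  ultimately show ?thesis
    using r sc tb by (simp add: Sig_append[OF sc])
qed

end


context group
begin

lemma Sig_cw:
  assumes tc: "\<And>a b. t a b \<in> carrier G" and ta: "ta \<in> carrier G" and tb: "tb \<in> carrier G"
    and N: "N \<ge> 1" and rel: "ta \<otimes> tb \<otimes> inv ta \<otimes> inv tb = Fp G N t N"
    and ij: "i < N" "j < N"
  shows "Sig G (sdef G N ta tb t) (int i) (int j) cw = t i j"
proof -
  let ?s = "sdef G N ta tb t"
  have sc: "\<And>p q x. ?s p q x \<in> carrier G" by (rule sdef_closed) (simp_all add: tc ta tb)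
  have e: "Sig G ?s (int i) (int j) cw = ?s (int i) (int j) GA \<otimes> (?s (int i + 1) (int j) GB \<otimes>
     (inv (?s (int i) (int j + 1) GA) \<otimes> inv (?s (int i) (int j) GB)))"
    using sc by (simp add: cw_def Sig.simps(2))
  have Qc: "\<And>k. Qp G t i k \<in> carrier G" "\<And>k. Fp G N t k \<in> carrier G" "\<And>k. Lp G N t k \<in> carrier G"
    using tc by simp_all
  have N1: "N = Suc (N - 1)" using N by simp
  show ?thesis
  proof (cases "i = N - 1")
    case iT: True
    show ?thesis
    proof (cases "j = N - 1")
      case jT: True
      have "Sig G ?s (int i) (int j) cw = Qp G t i (N - 1) \<otimes> ta \<otimes> (tb \<otimes> (inv ta \<otimes> inv (Fp G N t (N - 1) \<otimes> tb)))"
        unfolding e using iT jT ij N sd_A[of i N j ta tb t] sd_B_succ[of N i j ta tb t] sd_A_succ[of N i j ta tb t]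
          sd_B[of i N j ta tb t] ta tb Qc by (simp add: m_assoc)
      also have "\<dots> = Qp G t i (N - 1) \<otimes> (ta \<otimes> tb \<otimes> inv ta \<otimes> inv tb) \<otimes> inv (Fp G N t (N - 1))"
        using ta tb Qc by (simp add: m_assoc inv_mult_group)
      also have "\<dots> = Qp G t i (N - 1) \<otimes> Lp G N t (N - 1)"
        unfolding rel using Qc by (subst N1, subst Fp_Suc[OF tc]) (simp add: m_assoc)
      also have "\<dots> = t i j" using iT jT Qp_Lp[OF tc N] by simp
      finally show ?thesis .
    next
      case jF: False
      have "Sig G ?s (int i) (int j) cw = Qp G t i j \<otimes> inv (Qp G t i (Suc j))"
        unfolding e using iT jF ij N sd_A[of i N j ta tb t] sd_B_succ[of N i j ta tb t] sd_A_succ[of N i j ta tb t]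
          sd_B[of i N j ta tb t] ta tb Qc by (simp add: m_assoc inv_mult_group)
      also have "\<dots> = t i j" using Qc tc by (simp add: Qp_Suc inv_mult_group)
      finally show ?thesis .
    qed
  next
    case iF: False
    show ?thesis
    proof (cases "j = N - 1")
      case jT: True
      have "Sig G ?s (int i) (int j) cw = Qp G t i (N - 1) \<otimes> (Fp G N t (Suc i) \<otimes> (tb \<otimes> inv (Fp G N t i \<otimes> tb)))"
        unfolding e using iF jT ij N sd_A[of i N j ta tb t] sd_B_succ[of N i j ta tb t] sd_A_succ[of N i j ta tb t]
          sd_B[of i N j ta tb t] ta tb Qc by (simp add: m_assoc)
      also have "\<dots> = Qp G t i (N - 1) \<otimes> Lp G N t i"
        using Qc tb by (simp add: Fp_Suc[OF tc] m_assoc inv_mult_group)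
      also have "\<dots> = t i j" using jT Qp_Lp[OF tc N] by simp
      finally show ?thesis .
    next
      case jF: False
      have "Sig G ?s (int i) (int j) cw = Qp G t i j \<otimes> inv (Qp G t i (Suc j))"
        unfolding e using iF jF ij N sd_A[of i N j ta tb t] sd_B_succ[of N i j ta tb t] sd_A_succ[of N i j ta tb t]
          sd_B[of i N j ta tb t] ta tb Qc by (simp add: m_assoc inv_mult_group)
      also have "\<dots> = t i j" using Qc tc by (simp add: Qp_Suc inv_mult_group)
      finally show ?thesis .
    qed
  qed
qed

end


context group
begin

lemma Sig_tw:
  assumes tc: "\<And>a b. t a b \<in> carrier G" and ta: "ta \<in> carrier G" and tb: "tb \<in> carrier G"
    and N: "N \<ge> 1" and rel: "ta \<otimes> tb \<otimes> inv ta \<otimes> inv tb = Fp G N t N"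
    and ij: "i < N" "j < N"
  shows "Sig G (sdef G N ta tb t) 0 0 (tw i j) = t i j"
proof -
  let ?s = "sdef G N ta tb t"
  have sc: "\<And>p q x. ?s p q x \<in> carrier G" by (rule sdef_closed) (simp_all add: tc ta tb)
  have r1: "Sig G ?s 0 0 (replicate i (GA, False)) = \<one>"
  proof (rule Sig_rep_pos[OF _ sc])
    fix k assume k: "k < i"
    then have "k \<noteq> N - 1" using ij by linarith
    then show "?s (0 + int k * dA GA) (0 + int k * dB GA) GA = \<one>"
      using sd_A[of k N 0 ta tb t] tc ij k by simp
  qed
  have r2: "Sig G ?s (int i) 0 (replicate j (GB, False)) = \<one>"
  proof (rule Sig_rep_pos[OF _ sc])
    fix k assume k: "k < j"
    then have "k \<noteq> N - 1" using ij by linarith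
    then show "?s (int i + int k * dA GB) (0 + int k * dB GB) GB = \<one>"
      using sd_B[of i N k ta tb t] tc ij k by simp
  qed
  have r3: "Sig G ?s (int i) (int j) (replicate j (GB, True)) = \<one>"
  proof (rule Sig_rep_neg[OF _ sc])
    fix k assume k: "k < j"
    have e: "int i - int (Suc k) * dA GB = int i" "int j - int (Suc k) * dB GB = int (j - Suc k)"
      using k by simp_all
    have "j - Suc k \<noteq> N - 1" using ij k by linarith
    then show "?s (int i - int (Suc k) * dA GB) (int j - int (Suc k) * dB GB) GB = \<one>"
      unfolding e using sd_B[of i N "j - Suc k" ta tb t] tc ij k by simp
  qed
  have r4: "Sig G ?s (int i) 0 (replicate i (GA, True)) = \<one>"
  proof (rule Sig_rep_neg[OF _ sc])
    fix k assume k: "k < i"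
    have e: "int i - int (Suc k) * dA GA = int (i - Suc k)" "0 - int (Suc k) * dB GA = int 0"
      using k by simp_all
    have "i - Suc k \<noteq> N - 1" using ij k by linarith
    then show "?s (int i - int (Suc k) * dA GA) (0 - int (Suc k) * dB GA) GA = \<one>"
      unfolding e using sd_A[of "i - Suc k" N 0 ta tb t] tc ij k by simp
  qed
  have c: "Sig G ?s (int i) (int j) cw = t i j"
    by (rule Sig_cw[OF tc ta tb N rel ij])
  have cwe: "expsum GA cw = 0" "expsum GB cw = 0" by (simp_all add: cw_def)
  show ?thesis
    unfolding tw_def using r1 r2 r3 r4 c cwe tc
    by (simp add: Sig_append[OF sc])
qed

end


lemma group_PF: "group (PF N)"
  unfolding PF_def by (rule group_FG)

lemma PF_carrier: "w \<in> carrier (PF N) \<longleftrightarrow> red w = w \<and> fst ` set w \<subseteq> pgens N"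
  by (simp add: PF_def FG_carrier)

lemma gen_PF: "g \<in> pgens N \<Longrightarrow> gen_word g \<in> carrier (PF N)"
  by (simp add: PF_carrier gen_word_def red_Cons cons_red_def)

lemma pgen_img_G2[simp]: "pgen_img N g \<in> carrier Gamma2"
  by (cases g) (simp_all add: pgen_img_def)

lemma pres_map_hom: "pres_map N \<in> hom (PF N) Gamma2"
  unfolding pres_map_def PF_def by (rule G2.free_ext_hom) auto

lemma pres_map_gen: "pres_map N (gen_word g) = pgen_img N g"
  by (simp add: pres_map_def gen_word_def limg_def)

lemma img_pgens: "pgen_img N ` pgens N = genU N"
proof
  show "pgen_img N ` pgens N \<subseteq> genU N"
    by (auto simp: pgens_def genU_def pgen_img_def) blast
next
  show "genU N \<subseteq> pgen_img N ` pgens N"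
  proof
    fix x assume "x \<in> genU N"
    then consider "x = Amat [^]\<^bsub>Gamma2\<^esub> N" | "x = Bmat [^]\<^bsub>Gamma2\<^esub> N"
      | i j where "i < N" "j < N" "x = Tconj i j" by (auto simp: genU_def)
    then show "x \<in> pgen_img N ` pgens N"
    proof cases
      case 1 then show ?thesis by (intro image_eqI[of _ _ Pa]) (auto simp: pgen_img_def pgens_def)
    next
      case 2 then show ?thesis by (intro image_eqI[of _ _ Pb]) (auto simp: pgen_img_def pgens_def)
    next
      case (3 i j) then show ?thesis by (intro image_eqI[of _ _ "PT i j"]) (auto simp: pgen_img_def pgens_def)
    qed
  qed
qed

lemma part2:
  assumes N: "N \<ge> 1"
  shows "pres_map N ` carrier (PF N) = Phi N"
proof -
  have "pres_map N ` carrier (PF N) = generate Gamma2 (pgen_img N ` pgens N)"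
    unfolding pres_map_def PF_def by (rule G2.free_ext_image) auto
  then show ?thesis using img_pgens generate_eq_Phi[OF N] by simp
qed

lemma rev_upt_map: "map (\<lambda>i. N - 1 - i) [0..<N] = rev [0..<N]"
  by (rule nth_equalityI) (auto simp: rev_nth)

lemma P_list_carrier:
  assumes N: "N \<ge> 1"
  shows "set (concat (map (\<lambda>i. map (\<lambda>j. gen_word (PT (N - 1 - i) j)) [0..<N]) [0..<N])) \<subseteq> carrier (PF N)"
  using N by (auto intro!: gen_PF simp: pgens_def)

lemma relator_eq:
  "relator N = gen_word Pa \<otimes>\<^bsub>PF N\<^esub> gen_word Pb \<otimes>\<^bsub>PF N\<^esub> inv\<^bsub>PF N\<^esub> gen_word Pa
     \<otimes>\<^bsub>PF N\<^esub> inv\<^bsub>PF N\<^esub> gen_word Pb \<otimes>\<^bsub>PF N\<^esub>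
     inv\<^bsub>PF N\<^esub> lprod (PF N) (concat (map (\<lambda>i. map (\<lambda>j. gen_word (PT (N - 1 - i) j)) [0..<N]) [0..<N]))"
  unfolding relator_def Let_def ..

lemma relator_carrier:
  assumes N: "N \<ge> 1"
  shows "relator N \<in> carrier (PF N)"
proof -
  interpret F: group "PF N" by (rule group_PF)
  have "gen_word Pa \<in> carrier (PF N)" "gen_word Pb \<in> carrier (PF N)"
    by (auto intro!: gen_PF simp: pgens_def)
  then show ?thesis using P_list_carrier[OF N]
    unfolding relator_def Let_def by (intro F.m_closed F.inv_closed F.lprod_closed) auto
qed

lemma pres_relator:
  assumes N: "N \<ge> 1"
  shows "pres_map N (relator N) = \<one>\<^bsub>Gamma2\<^esub>"
proof -
  interpret F: group "PF N" by (rule group_PF)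
  interpret h: group_hom "PF N" Gamma2 "pres_map N"
    by (simp add: group_hom_def group_hom_axioms_def group_PF group_Gamma2 pres_map_hom)
  let ?L = "concat (map (\<lambda>i. map (\<lambda>j. gen_word (PT (N - 1 - i) j)) [0..<N]) [0..<N])"
  have ab: "gen_word Pa \<in> carrier (PF N)" "gen_word Pb \<in> carrier (PF N)"
    by (auto intro!: gen_PF simp: pgens_def)
  have Lc: "set ?L \<subseteq> carrier (PF N)" by (rule P_list_carrier[OF N])
  have "pres_map N (lprod (PF N) ?L) = lprod Gamma2 (map (pres_map N) ?L)"
    by (rule lprod_hom[OF group_PF group_Gamma2 pres_map_hom Lc])
  also have "map (pres_map N) ?L = concat (map (\<lambda>m. map (\<lambda>k. Tconj m k) [0..<N]) (map (\<lambda>i. N - 1 - i) [0..<N]))"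
    by (simp add: map_concat pres_map_gen pgen_img_def o_def)
  also have "\<dots> = concat (map (\<lambda>m. map (\<lambda>k. Tconj m k) [0..<N]) (rev [0..<N]))"
    by (simp only: rev_upt_map)
  also have "lprod Gamma2 \<dots> = Amat [^]\<^bsub>Gamma2\<^esub> N \<otimes>\<^bsub>Gamma2\<^esub> Bmat [^]\<^bsub>Gamma2\<^esub> N
     \<otimes>\<^bsub>Gamma2\<^esub> inv\<^bsub>Gamma2\<^esub> (Amat [^]\<^bsub>Gamma2\<^esub> N) \<otimes>\<^bsub>Gamma2\<^esub> inv\<^bsub>Gamma2\<^esub> (Bmat [^]\<^bsub>Gamma2\<^esub> N)"
    unfolding Tconj_def Cmat_def by (rule G2.comm_pow_identity2[symmetric]) simp_all
  finally have P: "pres_map N (lprod (PF N) ?L) = Amat [^]\<^bsub>Gamma2\<^esub> N \<otimes>\<^bsub>Gamma2\<^esub> Bmat [^]\<^bsub>Gamma2\<^esub> N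
     \<otimes>\<^bsub>Gamma2\<^esub> inv\<^bsub>Gamma2\<^esub> (Amat [^]\<^bsub>Gamma2\<^esub> N) \<otimes>\<^bsub>Gamma2\<^esub> inv\<^bsub>Gamma2\<^esub> (Bmat [^]\<^bsub>Gamma2\<^esub> N)" .
  have Pc: "lprod (PF N) ?L \<in> carrier (PF N)" using Lc by auto
  have "pres_map N (relator N) = pres_map N (gen_word Pa) \<otimes>\<^bsub>Gamma2\<^esub> pres_map N (gen_word Pb)
     \<otimes>\<^bsub>Gamma2\<^esub> inv\<^bsub>Gamma2\<^esub> pres_map N (gen_word Pa) \<otimes>\<^bsub>Gamma2\<^esub> inv\<^bsub>Gamma2\<^esub> pres_map N (gen_word Pb)
     \<otimes>\<^bsub>Gamma2\<^esub> inv\<^bsub>Gamma2\<^esub> pres_map N (lprod (PF N) ?L)"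
    unfolding relator_def Let_def using ab Pc by simp
  also have "\<dots> = \<one>\<^bsub>Gamma2\<^esub>"
    unfolding P by (simp add: pres_map_gen pgen_img_def)
  finally show ?thesis .
qed


section \<open>The kernel\<close>

lemma R_normal:
  assumes N: "N \<ge> 1"
  shows "normal_closure (PF N) {relator N} \<lhd> PF N"
proof -
  interpret F: group "PF N" by (rule group_PF)
  have rc: "relator N \<in> carrier (PF N)" by (rule relator_carrier[OF N])
  show ?thesis
    unfolding normal_closure_def
  proof (rule F.normal_generateI)
    show "{g \<otimes>\<^bsub>PF N\<^esub> s \<otimes>\<^bsub>PF N\<^esub> inv\<^bsub>PF N\<^esub> g |g s. g \<in> carrier (PF N) \<and> s \<in> {relator N}} \<subseteq> carrier (PF N)"
      using rc by auto
  next
    fix h g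
    assume h: "h \<in> {g \<otimes>\<^bsub>PF N\<^esub> s \<otimes>\<^bsub>PF N\<^esub> inv\<^bsub>PF N\<^esub> g |g s. g \<in> carrier (PF N) \<and> s \<in> {relator N}}"
      and g: "g \<in> carrier (PF N)"
    from h obtain g' where g': "g' \<in> carrier (PF N)" "h = g' \<otimes>\<^bsub>PF N\<^esub> relator N \<otimes>\<^bsub>PF N\<^esub> inv\<^bsub>PF N\<^esub> g'"
      by auto
    have "g \<otimes>\<^bsub>PF N\<^esub> h \<otimes>\<^bsub>PF N\<^esub> inv\<^bsub>PF N\<^esub> g
       = (g \<otimes>\<^bsub>PF N\<^esub> g') \<otimes>\<^bsub>PF N\<^esub> relator N \<otimes>\<^bsub>PF N\<^esub> inv\<^bsub>PF N\<^esub> (g \<otimes>\<^bsub>PF N\<^esub> g')"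
      using g g' rc by (simp add: F.m_assoc F.inv_mult_group)
    moreover have "g \<otimes>\<^bsub>PF N\<^esub> g' \<in> carrier (PF N)" using g g' by simp
    ultimately show "g \<otimes>\<^bsub>PF N\<^esub> h \<otimes>\<^bsub>PF N\<^esub> inv\<^bsub>PF N\<^esub> g
       \<in> {g \<otimes>\<^bsub>PF N\<^esub> s \<otimes>\<^bsub>PF N\<^esub> inv\<^bsub>PF N\<^esub> g |g s. g \<in> carrier (PF N) \<and> s \<in> {relator N}}"
      by blast
  qed
qed

lemma relator_in_R:
  assumes N: "N \<ge> 1"
  shows "relator N \<in> normal_closure (PF N) {relator N}"
proof -
  interpret F: group "PF N" by (rule group_PF)
  have rc: "relator N \<in> carrier (PF N)" by (rule relator_carrier[OF N])
  have "relator N = \<one>\<^bsub>PF N\<^esub> \<otimes>\<^bsub>PF N\<^esub> relator N \<otimes>\<^bsub>PF N\<^esub> inv\<^bsub>PF N\<^esub> \<one>\<^bsub>PF N\<^esub>"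
    using rc by simp
  then have "relator N \<in> {g \<otimes>\<^bsub>PF N\<^esub> s \<otimes>\<^bsub>PF N\<^esub> inv\<^bsub>PF N\<^esub> g |g s. g \<in> carrier (PF N) \<and> s \<in> {relator N}}"
    by blast
  then show ?thesis unfolding normal_closure_def by (rule generate.incl)
qed

lemma R_sub_kernel:
  assumes N: "N \<ge> 1"
  shows "normal_closure (PF N) {relator N} \<subseteq> kernel (PF N) Gamma2 (pres_map N)"
proof -
  interpret F: group "PF N" by (rule group_PF)
  interpret h: group_hom "PF N" Gamma2 "pres_map N"
    by (simp add: group_hom_def group_hom_axioms_def group_PF group_Gamma2 pres_map_hom)
  have rc: "relator N \<in> carrier (PF N)" by (rule relator_carrier[OF N])
  show ?thesis
    unfolding normal_closure_def
  proof (rule F.generate_subgroup_incl[OF _ h.subgroup_kernel])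
    show "{g \<otimes>\<^bsub>PF N\<^esub> s \<otimes>\<^bsub>PF N\<^esub> inv\<^bsub>PF N\<^esub> g |g s. g \<in> carrier (PF N) \<and> s \<in> {relator N}}
       \<subseteq> kernel (PF N) Gamma2 (pres_map N)"
      using rc pres_relator[OF N] by (auto simp: kernel_def)
  qed
qed

lemma Sig_per_gen:
  "\<And>p q p' q' x. p mod int N = p' mod int N \<Longrightarrow> q mod int N = q' mod int N \<Longrightarrow>
     sdef K N ta tb t p q x = sdef K N ta tb t p' q' x"
  by (rule sdef_per)

lemma kernel_sub_R:
  assumes N: "N \<ge> 1"
  shows "kernel (PF N) Gamma2 (pres_map N) \<subseteq> normal_closure (PF N) {relator N}"
proof
  let ?R = "normal_closure (PF N) {relator N}"
  let ?Q = "PF N Mod ?R"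
  interpret F: group "PF N" by (rule group_PF)
  interpret Rn: normal ?R "PF N" by (rule R_normal[OF N])
  interpret Q: group ?Q by (rule Rn.factorgroup_is_group)
  define pi where "pi = (\<lambda>a. ?R #>\<^bsub>PF N\<^esub> a)"
  interpret pi: group_hom "PF N" ?Q pi
    unfolding pi_def
    by (simp add: group_hom_def group_hom_axioms_def group_PF Rn.factorgroup_is_group Rn.r_coset_hom_Mod)
  interpret h: group_hom "PF N" Gamma2 "pres_map N"
    by (simp add: group_hom_def group_hom_axioms_def group_PF group_Gamma2 pres_map_hom)
  define ta where "ta = pi (gen_word Pa)"
  define tb where "tb = pi (gen_word Pb)"
  define tt where "tt = (\<lambda>i j. if i < N \<and> j < N then pi (gen_word (PT i j)) else \<one>\<^bsub>?Q\<^esub>)"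
  define s where "s = sdef ?Q N ta tb tt"
  have pic: "\<And>x. x \<in> carrier (PF N) \<Longrightarrow> pi x \<in> carrier ?Q" by simp
  have ab: "gen_word Pa \<in> carrier (PF N)" "gen_word Pb \<in> carrier (PF N)"
    by (auto intro!: gen_PF simp: pgens_def)
  have tac: "ta \<in> carrier ?Q" "tb \<in> carrier ?Q" using ab pic by (simp_all add: ta_def tb_def)
  have ttc: "\<And>a b. tt a b \<in> carrier ?Q"
    using Q.one_closed by (auto simp: tt_def intro!: pic gen_PF simp: pgens_def)
  have sc: "\<And>p q x. s p q x \<in> carrier ?Q" unfolding s_def by (rule Q.sdef_closed) (simp_all add: ttc tac)
  have per: "\<And>p q p' q' x. p mod int N = p' mod int N \<Longrightarrow> q mod int N = q' mod int N \<Longrightarrow> s p q x = s p' q' x"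
    unfolding s_def by (rule sdef_per)
  let ?L = "concat (map (\<lambda>i. map (\<lambda>j. gen_word (PT (N - 1 - i) j)) [0..<N]) [0..<N])"
  have Lc: "set ?L \<subseteq> carrier (PF N)" by (rule P_list_carrier[OF N])
  have Pc: "lprod (PF N) ?L \<in> carrier (PF N)" using Lc by auto
  have r1: "pi (relator N) = \<one>\<^bsub>?Q\<^esub>"
    unfolding pi_def using Rn.rcos_const[OF group_PF relator_in_R[OF N]] by simp
  have r2: "pi (relator N) = ta \<otimes>\<^bsub>?Q\<^esub> tb \<otimes>\<^bsub>?Q\<^esub> inv\<^bsub>?Q\<^esub> ta \<otimes>\<^bsub>?Q\<^esub> inv\<^bsub>?Q\<^esub> tb
       \<otimes>\<^bsub>?Q\<^esub> inv\<^bsub>?Q\<^esub> pi (lprod (PF N) ?L)"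
    unfolding ta_def tb_def using ab Pc by (simp add: relator_eq del: mult_FactGroup)
  have e0: "ta \<otimes>\<^bsub>?Q\<^esub> tb \<otimes>\<^bsub>?Q\<^esub> inv\<^bsub>?Q\<^esub> ta \<otimes>\<^bsub>?Q\<^esub> inv\<^bsub>?Q\<^esub> tb
       \<otimes>\<^bsub>?Q\<^esub> inv\<^bsub>?Q\<^esub> pi (lprod (PF N) ?L) = \<one>\<^bsub>?Q\<^esub>"
    by (rule trans[OF sym[OF r2] r1])
  have Xc: "ta \<otimes>\<^bsub>?Q\<^esub> tb \<otimes>\<^bsub>?Q\<^esub> inv\<^bsub>?Q\<^esub> ta \<otimes>\<^bsub>?Q\<^esub> inv\<^bsub>?Q\<^esub> tb \<in> carrier ?Q"
    using tac by (intro Q.m_closed Q.inv_closed)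
  have Yc: "pi (lprod (PF N) ?L) \<in> carrier ?Q" using Pc by (rule pic)
  have "inv\<^bsub>?Q\<^esub> (inv\<^bsub>?Q\<^esub> pi (lprod (PF N) ?L)) = ta \<otimes>\<^bsub>?Q\<^esub> tb \<otimes>\<^bsub>?Q\<^esub> inv\<^bsub>?Q\<^esub> ta \<otimes>\<^bsub>?Q\<^esub> inv\<^bsub>?Q\<^esub> tb"
    by (rule Q.inv_equality[OF e0 Q.inv_closed[OF Yc] Xc])
  then have rel0: "ta \<otimes>\<^bsub>?Q\<^esub> tb \<otimes>\<^bsub>?Q\<^esub> inv\<^bsub>?Q\<^esub> ta \<otimes>\<^bsub>?Q\<^esub> inv\<^bsub>?Q\<^esub> tb = pi (lprod (PF N) ?L)"
    by (simp only: Q.inv_inv[OF Yc])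
  have "pi (lprod (PF N) ?L) = lprod ?Q (map pi ?L)"
    by (rule lprod_hom[OF group_PF Rn.factorgroup_is_group pi.homh Lc])
  also have "map pi ?L = concat (map (\<lambda>m. map (tt m) [0..<N]) (map (\<lambda>i. N - 1 - i) [0..<N]))"
    using N by (auto simp: map_concat o_def tt_def intro!: arg_cong[where f=concat] map_cong)
  also have "\<dots> = concat (map (\<lambda>m. map (tt m) [0..<N]) (rev [0..<N]))"
    by (simp only: rev_upt_map)
  finally have rel: "ta \<otimes>\<^bsub>?Q\<^esub> tb \<otimes>\<^bsub>?Q\<^esub> inv\<^bsub>?Q\<^esub> ta \<otimes>\<^bsub>?Q\<^esub> inv\<^bsub>?Q\<^esub> tb = Fp ?Q N tt N"
    using rel0 by (simp add: Fp_def)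
  have phi: "\<And>g. g \<in> pgens N \<Longrightarrow> pgen_img N g \<in> Phi N"
    using img_pgens genU_Phi by blast
  have gen_val: "\<And>g. g \<in> pgens N \<Longrightarrow> Sig ?Q s 0 0 (pgen_img N g) = pi (gen_word g)"
  proof -
    fix g assume g: "g \<in> pgens N"
    show "Sig ?Q s 0 0 (pgen_img N g) = pi (gen_word g)"
    proof (cases g)
      case Pa
      then show ?thesis
        using Q.Sig_AN[where t=tt, OF ttc tac N] by (simp add: pgen_img_def G2_pow Q.Sig_red[OF sc]) (simp add: s_def ta_def)
    next
      case Pb
      then show ?thesis
        using Q.Sig_BN[where t=tt, OF ttc tac N] by (simp add: pgen_img_def G2_pow Q.Sig_red[OF sc]) (simp add: s_def tb_def)
    next
      case (PT i j)
      then have ij: "i < N" "j < N" using g by (auto simp: pgens_def)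
      then show ?thesis
        using Q.Sig_tw[where t=tt, OF ttc tac N rel ij] PT by (simp add: pgen_img_def Tconj_red Q.Sig_red[OF sc]) (simp add: s_def tt_def)
    qed
  qed
  have Sig_mult: "\<And>u v. u \<in> Phi N \<Longrightarrow> Sig ?Q s 0 0 (u \<otimes>\<^bsub>Gamma2\<^esub> v) = Sig ?Q s 0 0 u \<otimes>\<^bsub>?Q\<^esub> Sig ?Q s 0 0 v"
  proof -
    fix u v assume u: "u \<in> Phi N"
    then have u': "red u = u" "int N dvd expsum GA u" "int N dvd expsum GB u" by (auto simp: Phi_iff)
    have "u \<otimes>\<^bsub>Gamma2\<^esub> v = red (u @ v)" by (simp add: Gamma2_def FG_mult)
    then have "Sig ?Q s 0 0 (u \<otimes>\<^bsub>Gamma2\<^esub> v) = Sig ?Q s 0 0 u \<otimes>\<^bsub>?Q\<^esub> Sig ?Q s (0 + expsum GA u) (0 + expsum GB u) v"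
      by (simp add: Q.Sig_red[OF sc] Q.Sig_append[OF sc])
    also have "Sig ?Q s (0 + expsum GA u) (0 + expsum GB u) v = Sig ?Q s 0 0 v"
      using u' by (intro Q.Sig_mod[OF per]) (simp_all add: dvd_eq_mod_eq_0)
    finally show "Sig ?Q s 0 0 (u \<otimes>\<^bsub>Gamma2\<^esub> v) = Sig ?Q s 0 0 u \<otimes>\<^bsub>?Q\<^esub> Sig ?Q s 0 0 v" .
  qed
  have Sig_inv: "\<And>u. u \<in> Phi N \<Longrightarrow> Sig ?Q s 0 0 (inv\<^bsub>Gamma2\<^esub> u) = inv\<^bsub>?Q\<^esub> Sig ?Q s 0 0 u"
  proof -
    fix u assume u: "u \<in> Phi N"
    then have u': "red u = u" "int N dvd expsum GA u" "int N dvd expsum GB u" by (auto simp: Phi_iff)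
    have iu: "inv\<^bsub>Gamma2\<^esub> u = red (winv u)" using G2_inv_red[of u] u' by simp
    have "\<one>\<^bsub>?Q\<^esub> = Sig ?Q s 0 0 (red (winv u @ u))" by (simp add: red_winv)
    also have "\<dots> = Sig ?Q s 0 0 (winv u) \<otimes>\<^bsub>?Q\<^esub> Sig ?Q s (0 + expsum GA (winv u)) (0 + expsum GB (winv u)) u"
      by (simp add: Q.Sig_red[OF sc] Q.Sig_append[OF sc])
    also have "Sig ?Q s (0 + expsum GA (winv u)) (0 + expsum GB (winv u)) u = Sig ?Q s 0 0 u"
      using u' by (intro Q.Sig_mod[OF per]) (simp_all add: dvd_eq_mod_eq_0[symmetric])
    finally have "Sig ?Q s 0 0 (winv u) \<otimes>\<^bsub>?Q\<^esub> Sig ?Q s 0 0 u = \<one>\<^bsub>?Q\<^esub>" by simp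
    then have "inv\<^bsub>?Q\<^esub> Sig ?Q s 0 0 u = Sig ?Q s 0 0 (winv u)"
      by (intro Q.inv_equality) (simp_all add: Q.Sig_closed[OF sc])
    then show "Sig ?Q s 0 0 (inv\<^bsub>Gamma2\<^esub> u) = inv\<^bsub>?Q\<^esub> Sig ?Q s 0 0 u"
      unfolding iu by (simp add: Q.Sig_red[OF sc])
  qed
  have main: "\<And>w. fst ` set w \<subseteq> pgens N \<Longrightarrow> Sig ?Q s 0 0 (pres_map N w) = pi (red w)"
  proof -
    fix w :: "(pgen \<times> bool) list"
    show "fst ` set w \<subseteq> pgens N \<Longrightarrow> Sig ?Q s 0 0 (pres_map N w) = pi (red w)"
    proof (induct w)
      case Nil
      have e1: "\<one>\<^bsub>PF N\<^esub> = []" by (simp add: PF_def FG_one)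
      have "pi [] = \<one>\<^bsub>?Q\<^esub>" using pi.hom_one unfolding e1 .
      then show ?case by (simp add: pres_map_def G2_one)
    next
      case (Cons l w)
      obtain g e where l: "l = (g, e)" by (cases l)
      have g: "g \<in> pgens N" using Cons(2) l by auto
      have wS: "fst ` set w \<subseteq> pgens N" using Cons(2) by auto
      have pm: "pres_map N (l # w) = limg Gamma2 (pgen_img N) l \<otimes>\<^bsub>Gamma2\<^esub> pres_map N w"
        by (simp add: pres_map_def)
      have ph: "limg Gamma2 (pgen_img N) l \<in> Phi N"
        using phi[OF g] l subgroup.m_inv_closed[OF Phi_subgroup] by (auto simp: limg_def)
      have lv: "Sig ?Q s 0 0 (limg Gamma2 (pgen_img N) l) = pi (red [l])"
      proof (cases e)
        case True
        have "red [l] = inv\<^bsub>PF N\<^esub> (gen_word g)"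
          using FG_inv_red[of "[(g, False)]" "pgens N"] g l True
          by (simp add: PF_def gen_word_red winv_def flipl_def)
        then show ?thesis
          using l True Sig_inv[OF phi[OF g]] gen_val[OF g] gen_PF[OF g]
          by (simp add: limg_def pi.hom_inv)
      next
        case False
        then show ?thesis using l gen_val[OF g] by (simp add: limg_def gen_word_red)
      qed
      have "red (l # w) = red [l] \<otimes>\<^bsub>PF N\<^esub> red w"
        by (simp add: PF_def FG_red_mult)
      moreover have "red [l] \<in> carrier (PF N)" "red w \<in> carrier (PF N)"
        using g l wS by (auto simp: PF_def intro!: red_in_FG)
      ultimately have "pi (red (l # w)) = pi (red [l]) \<otimes>\<^bsub>?Q\<^esub> pi (red w)"
        by (simp only: pi.hom_mult)
      then show ?case using pm Sig_mult[OF ph] lv Cons(1)[OF wS] by simp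
    qed
  qed
  fix x assume x: "x \<in> kernel (PF N) Gamma2 (pres_map N)"
  then have xc: "x \<in> carrier (PF N)" and px: "pres_map N x = []"
    by (auto simp: kernel_def G2_one)
  have "pi x = pi (red x)" using xc by (simp add: PF_carrier)
  also have "\<dots> = Sig ?Q s 0 0 (pres_map N x)" using main xc by (simp add: PF_carrier)
  also have "\<dots> = \<one>\<^bsub>?Q\<^esub>" using px by simp
  finally have "?R #>\<^bsub>PF N\<^esub> x = ?R" unfolding pi_def by simp
  then show "x \<in> ?R" using F.coset_join1 xc Rn.subgroup_axioms by blast
qed

theorem proposition6:
  fixes N :: nat
  assumes "N \<ge> 1"
  shows "generate Gamma2 (genU N) = Phi N
       \<and> pres_map N ` carrier (PF N) = Phi N
       \<and> kernel (PF N) Gamma2 (pres_map N) = normal_closure (PF N) {relator N}"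
  using generate_eq_Phi[OF assms] part2[OF assms] kernel_sub_R[OF assms] R_sub_kernel[OF assms]
  by blast

end
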